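(* Let $N\ge2$, $s\in(0,1)$, $\beta\in(0,1]$, and let $\mathcal K_s$ be a kernel as described in the context. Let $E\subset\mathbb{R}^N$ be an open set with $\partial E$ of class $C^{1,\beta}$, $0\in\partial E$, and suppose there is $r>0$ such that $$E\cap Q_r=\{(y',y_N)\in B^{N-1}_r\times(-r,r):\ y_N>\gamma(y')\},$$ where $Q_r=B^{N-1}_r\times(-r,r)$, $B^{N-1}_r$ is the ball of radius $r$ centred at $0$ in $\mathbb{R}^{N-1}$, and $\gamma\in C^{1,\beta}(B^{N-1}_r)$ satisfies $|\gamma(y')|\le C_\gamma|y'|^{1+\beta}$. Define $$w(z,t)=\int_{\mathbb{R}^N}\mathcal K_s(z-y,t)\tau_E(y)\,dy,\qquad \tau_E=\mathbb 1_E-\mathbb 1_{\mathbb{R}^N\setminus\overline E}.$$ Then there exist $t_0>0$ and $C>0$, depending only on $N,s,\beta$ and $E$, such that for all $t\in(0,t_0)$ and all $z\in B_{t^{1/(2s)}}$ (the ball of radius $t^{1/(2s)}$ centred at $0$ in $\mathbb{R}^N$), $$\frac{\partial w}{\partial z_N}(z,t)\ge C\,t^{-\frac1{2s}}.$$ Consequently, for all $t\in(0,t_0)$, the set $\{z\in\mathbb{R}^N: w(z,t)=0\}\cap B_{t^{1/(2s)}}$ is of class $C^1$.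
   Context: Kernel: $\mathcal K_s(x,t)=t^{-\frac{N}{2s}}P_s(t^{-\frac1{2s}}x)$ for $x\in\mathbb{R}^N$, $t>0$, where $P_s\in C^1(\mathbb{R}^N)$ is radially symmetric, and there are constants $\mathcal C_{N,s}>0$, $C_{N,s}>0$ with $$\frac{\mathcal C_{N,s}^{-1}}{1+|y|^{N+2s}}\le P_s(y)\le\frac{\mathcal C_{N,s}}{1+|y|^{N+2s}},\qquad |\nabla P_s(y)|\le\frac{\mathcal C_{N,s}}{1+|y|^{N+2s+1}}\quad(y\in\mathbb{R}^N),$$ and $\lim_{t\to0}t^{-1}\mathcal K_s(y,t)=\frac{C_{N,s}}{|y|^{N+2s}}$ locally uniformly in $\mathbb{R}^N\setminus\{0\}$. *)

theory Defs
  imports "HOL-Analysis.Analysis"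
begin

(* R^N is represented as (real^'m::finite) \<times> real, i.e. points (y', y_N) with y' \<in> R^(N-1),
   N - 1 = CARD('m) \<ge> 1, so N \<ge> 2. *)

definition kern :: "real \<Rightarrow> ((real^'m::finite) \<times> real \<Rightarrow> real) \<Rightarrow> (real^'m::finite) \<times> real \<Rightarrow> real \<Rightarrow> real" where
  "kern s P x t = t powr (- real (CARD('m) + 1) / (2 * s)) * P (t powr (-1/(2 * s)) *\<^sub>R x)"

definition kernel_profile :: "real \<Rightarrow> ((real^'m::finite) \<times> real \<Rightarrow> real) \<Rightarrow> real \<Rightarrow> real \<Rightarrow> bool" where
  "kernel_profile s P Cc C \<longleftrightarrow>
     Cc > 0 \<and> C > 0 \<and>
     (\<forall>x y. norm x = norm y \<longrightarrow> P x = P y) \<and>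
     (\<exists>DP. (\<forall>y. (P has_derivative (\<lambda>h. DP y \<bullet> h)) (at y)) \<and> continuous_on UNIV DP \<and>
        (\<forall>y. norm (DP y) \<le> Cc / (1 + norm y powr (real (CARD('m) + 1) + 2 * s + 1)))) \<and>
     (\<forall>y. (1/Cc) / (1 + norm y powr (real (CARD('m) + 1) + 2 * s)) \<le> P y \<and>
          P y \<le> Cc / (1 + norm y powr (real (CARD('m) + 1) + 2 * s))) \<and>
     (\<forall>K. compact K \<and> 0 \<notin> K \<longrightarrow>
        uniform_limit K (\<lambda>t y. kern s P y t / t)
          (\<lambda>y. C / norm y powr (real (CARD('m) + 1) + 2 * s)) (at_right 0))"

definition C1beta_ball :: "real \<Rightarrow> real \<Rightarrow> ((real^'m::finite) \<Rightarrow> real) \<Rightarrow> bool" where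
  "C1beta_ball r \<beta> \<gamma> \<longleftrightarrow>
     (\<exists>D L. (\<forall>a\<in>ball 0 r. (\<gamma> has_derivative (\<lambda>h. D a \<bullet> h)) (at a)) \<and>
            (\<forall>a\<in>ball 0 r. \<forall>b\<in>ball 0 r. norm (D a - D b) \<le> L * norm (a - b) powr \<beta>))"

definition cyl :: "real \<Rightarrow> ((real^'m::finite) \<times> real) set" where
  "cyl r = {(y', yN). norm y' < r \<and> \<bar>yN\<bar> < r}"

definition C1beta_boundary :: "real \<Rightarrow> ((real^'m::finite) \<times> real) set \<Rightarrow> bool" where
  "C1beta_boundary \<beta> E \<longleftrightarrow>
     (\<forall>x0\<in>frontier E. \<exists>(R :: (real^'m) \<times> real \<Rightarrow> (real^'m) \<times> real) r \<gamma>. orthogonal_transformation R \<and> r > 0 \<and> C1beta_ball r \<beta> \<gamma> \<and>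
        (\<lambda>y. R (y - x0)) ` E \<inter> cyl r = {(y', yN). (y', yN) \<in> cyl r \<and> yN > \<gamma> y'})"

definition tauE :: "((real^'m::finite) \<times> real) set \<Rightarrow> (real^'m::finite) \<times> real \<Rightarrow> real" where
  "tauE E y = indicator E y - indicator (- closure E) y"

definition heat_w :: "real \<Rightarrow> ((real^'m::finite) \<times> real \<Rightarrow> real) \<Rightarrow> ((real^'m::finite) \<times> real) set
                      \<Rightarrow> (real^'m::finite) \<times> real \<Rightarrow> real \<Rightarrow> real" where
  "heat_w s P E z t = (\<integral>y. kern s P (z - y) t * tauE E y \<partial>lborel)"

definition C1_graph_set :: "((real^'m::finite) \<times> real) set \<Rightarrow> bool" where
  "C1_graph_set Z \<longleftrightarrow>
     (\<exists>U g D. open U \<and> (\<forall>x\<in>U. (g has_derivative (\<lambda>h. D x \<bullet> h)) (at x)) \<and>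
        continuous_on U D \<and> Z = (\<lambda>x. (x, g x)) ` U)"

end

theory Submission
  imports Defs
begin



lemma nn_integral_affine_eucl:
  fixes f :: "'a::euclidean_space \<Rightarrow> ennreal" and c :: real
  assumes [measurable]: "f \<in> borel_measurable borel" and c: "c \<noteq> 0"
  shows "(\<integral>\<^sup>+x. f x \<partial>lborel) = ennreal (\<bar>c\<bar>^DIM('a)) * (\<integral>\<^sup>+x. f (t + c *\<^sub>R x) \<partial>lborel)"
  by (subst lborel_affine[OF c, of t])
     (simp add: nn_integral_density nn_integral_distr nn_integral_cmult)

lemma integrable_affine_eucl:
  fixes f :: "'a::euclidean_space \<Rightarrow> 'b :: {banach, second_countable_topology}"
  assumes f: "integrable lborel f" and c: "c \<noteq> 0"
  shows "integrable lborel (\<lambda>x. f (t + c *\<^sub>R x))"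
  using f f[THEN borel_measurable_integrable] unfolding integrable_iff_bounded
  by (subst (asm) nn_integral_affine_eucl[where c=c and t=t])
     (auto simp: ennreal_mult_less_top c)

lemma integral_affine_eucl:
  fixes f :: "'a::euclidean_space \<Rightarrow> 'b :: {banach, second_countable_topology}" and c :: real
  assumes c: "c \<noteq> 0" shows "(\<integral>x. f x \<partial> lborel) = (\<bar>c\<bar>^DIM('a)) *\<^sub>R (\<integral>x. f (t + c *\<^sub>R x) \<partial>lborel)"
proof cases
  assume f[measurable]: "integrable lborel f" then show ?thesis
    using c f f[THEN borel_measurable_integrable] f[THEN integrable_affine_eucl, of c t]
    by (subst lborel_affine[OF c, of t])
       (simp add: integral_density integral_distr)
next
  assume nf: "\<not> integrable lborel f"
  have "\<not> integrable lborel (\<lambda>x. f (t + c *\<^sub>R x))"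
  proof
    assume "integrable lborel (\<lambda>x. f (t + c *\<^sub>R x))"
    from integrable_affine_eucl[OF this, of "1/c" "- t /\<^sub>R c"] c
    have "integrable lborel (\<lambda>x. f (t + c *\<^sub>R (- t /\<^sub>R c + (1 / c) *\<^sub>R x)))" by simp
    also have "(\<lambda>x. f (t + c *\<^sub>R (- t /\<^sub>R c + (1 / c) *\<^sub>R x))) = f"
      using c by (auto simp: algebra_simps)
    finally show False using nf by simp
  qed
  with nf show ?thesis
    by (simp add: not_integrable_integral_eq)
qed



lemma integrable_decay:
  fixes f :: "'a::euclidean_space \<Rightarrow> real"
  assumes fm[measurable]: "f \<in> borel_measurable borel"
    and f0: "\<And>x. 0 \<le> f x" and fC: "\<And>x. f x \<le> C"
    and fd: "\<And>x. R \<le> norm x \<Longrightarrow> f x \<le> C * norm x powr (-p)"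
    and R: "R > 0" and p: "p > DIM('a)"
  shows "integrable lborel f"
proof -
  define cube where "cube \<rho> = cbox (-(\<rho> *\<^sub>R One)) (\<rho> *\<^sub>R One :: 'a)" for \<rho> :: real
  have cube_in: "x \<in> cube \<rho>" if "norm x \<le> \<rho>" for x \<rho>
    unfolding cube_def mem_box
  proof (intro ballI conjI)
    fix i :: 'a assume i: "i \<in> Basis"
    have "\<bar>x \<bullet> i\<bar> \<le> norm x" using Basis_le_norm[OF i] .
    then show "- (\<rho> *\<^sub>R One) \<bullet> i \<le> x \<bullet> i" "x \<bullet> i \<le> (\<rho> *\<^sub>R One) \<bullet> i"
      using that i by auto
  qed
  have meas_cube: "emeasure lborel (cube \<rho>) = ennreal ((2*\<rho>)^DIM('a))" if "\<rho> \<ge> 0" for \<rho>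
  proof -
    have "prod ((\<bullet>) (\<rho> *\<^sub>R One + \<rho> *\<^sub>R One)) (Basis::'a set) = prod (\<lambda>_. 2*\<rho>) (Basis::'a set)"
      by (intro prod.cong) (auto simp: inner_add_left)
    then show ?thesis using that by (simp add: cube_def emeasure_lborel_cbox_eq inner_diff_left power_mult_distrib)
  qed
  have C0: "C \<ge> 0" using f0[of 0] fC[of 0] by linarith
  define c where "c k = C * (R * 2^k) powr (-p)" for k::nat
  define \<rho> where "\<rho> k = R * 2^(Suc k)" for k::nat
  have c0: "c k \<ge> 0" for k using C0 by (simp add: c_def)
  have pt: "ennreal (f x) \<le> ennreal C * indicator (cube R) x + (\<Sum>k. ennreal (c k) * indicator (cube (\<rho> k)) x)" for x
  proof (cases "norm x < R")
    case True
    then have "x \<in> cube R" by (intro cube_in) auto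
    then have "ennreal (f x) \<le> ennreal C * indicator (cube R) x"
      using fC[of x] by (simp add: ennreal_leI)
    then show ?thesis by (simp add: add_increasing2)
  next
    case False
    define k where "k = nat \<lfloor>log 2 (norm x / R)\<rfloor>"
    have q1: "1 \<le> norm x / R" using False R by simp
    have lg: "0 \<le> log 2 (norm x / R)" using q1 by simp
    have k1: "real k = of_int \<lfloor>log 2 (norm x / R)\<rfloor>" using lg by (simp add: k_def)
    have "(2::real) ^ k = 2 powr (real k)" by (simp add: powr_realpow)
    also have "\<dots> \<le> 2 powr (log 2 (norm x / R))" unfolding k1 by (intro powr_mono) auto
    also have "\<dots> = norm x / R" using q1 by simp
    finally have lo: "R * 2 ^ k \<le> norm x" using R by (simp add: field_simps)
    have "norm x / R = 2 powr (log 2 (norm x / R))" using q1 by simp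
    also have "\<dots> < 2 powr (real k + 1)" unfolding k1 by (intro powr_less_mono) linarith+
    also have "\<dots> = 2 ^ Suc k" by (simp add: powr_realpow[symmetric] powr_add)
    finally have hi: "norm x < \<rho> k" using R by (simp add: \<rho>_def field_simps)
    have "f x \<le> C * norm x powr (-p)" using fd False by simp
    also have "\<dots> \<le> C * (R * 2^k) powr (-p)"
      using lo R p C0 by (intro mult_left_mono powr_mono2') auto
    finally have fk: "f x \<le> c k" by (simp add: c_def)
    have xin: "x \<in> cube (\<rho> k)" using hi by (intro cube_in) auto
    have "ennreal (f x) \<le> ennreal (c k) * indicator (cube (\<rho> k)) x"
      using fk xin by (simp add: ennreal_leI)
    also have "\<dots> \<le> (\<Sum>j. ennreal (c j) * indicator (cube (\<rho> j)) x)"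
    proof -
      have "(\<Sum>j\<in>{k}. ennreal (c j) * indicator (cube (\<rho> j)) x) \<le> (\<Sum>j. ennreal (c j) * indicator (cube (\<rho> j)) x)"
        by (rule sum_le_suminf) auto
      then show ?thesis by (metis sum.insert[of "{}" k] empty_iff finite.emptyI sum.empty add_0_right)
    qed
    finally show ?thesis by (simp add: add_increasing)
  qed
  have sumeq: "c k * (2 * \<rho> k) ^ DIM('a) = (C * 4 ^ DIM('a) * R powr (DIM('a) - p)) * (2 powr (DIM('a) - p)) ^ k" for k
  proof -
    have "c k * (2 * \<rho> k) ^ DIM('a) = C * ((R * 2^k) powr (-p) * (4 * (R * 2^k)) ^ DIM('a))"
      by (simp add: c_def \<rho>_def mult_ac)
    also have "(R * 2^k) powr (-p) * (4 * (R * 2^k)) ^ DIM('a) = 4 ^ DIM('a) * (R * 2^k) powr (DIM('a) - p)"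
    proof -
      have aux: "X powr (-p) * (4*X)^n = 4^n * X powr (real n - p)" if "X > 0" for X :: real and n :: nat
        using that by (simp add: power_mult_distrib powr_diff powr_realpow powr_minus_divide)
      show ?thesis using R by (intro aux) simp
    qed
    also have "(R * 2^k) powr (DIM('a) - p) = R powr (DIM('a) - p) * (2 powr (DIM('a) - p)) ^ k"
      using R by (simp add: powr_mult powr_realpow[symmetric] powr_powr mult.commute)
    finally show ?thesis by (simp add: mult_ac)
  qed
  have summ: "summable (\<lambda>k. c k * (2 * \<rho> k) ^ DIM('a))"
    unfolding sumeq using p
    by (intro summable_mult summable_geometric) (auto simp: powr_less_one)
  have "(\<integral>\<^sup>+x. ennreal (norm (f x)) \<partial>lborel) \<le> (\<integral>\<^sup>+x. (ennreal C * indicator (cube R) x + (\<Sum>k. ennreal (c k) * indicator (cube (\<rho> k)) x)) \<partial>lborel)"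
    using pt f0 by (intro nn_integral_mono) simp
  also have "\<dots> = ennreal C * emeasure lborel (cube R) + (\<Sum>k. ennreal (c k) * emeasure lborel (cube (\<rho> k)))"
    by (simp add: nn_integral_add nn_integral_suminf nn_integral_cmult_indicator cube_def)
  also have "\<dots> = ennreal (C * (2*R)^DIM('a)) + (\<Sum>k. ennreal (c k * (2 * \<rho> k) ^ DIM('a)))"
    using R C0 c0 by (simp add: meas_cube \<rho>_def ennreal_mult)
  also have "(\<Sum>k. ennreal (c k * (2 * \<rho> k) ^ DIM('a))) = ennreal (\<Sum>k. c k * (2 * \<rho> k) ^ DIM('a))"
    using summ c0 R by (intro suminf_ennreal2) (auto simp: \<rho>_def)
  finally have "(\<integral>\<^sup>+x. ennreal (norm (f x)) \<partial>lborel) < \<infinity>"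
    by (simp add: le_less_trans ennreal_add_less_top)
  then show ?thesis by (simp add: integrable_iff_bounded)
qed



lemma dc_ev:
  fixes f :: "'a \<Rightarrow> 'b::{banach, second_countable_topology}" and w :: "'a \<Rightarrow> real"
  assumes "f \<in> borel_measurable M" "\<And>i. s i \<in> borel_measurable M" "integrable M w"
  assumes lim: "AE x in M. (\<lambda>i. s i x) \<longlonglongrightarrow> f x"
  assumes bound: "eventually (\<lambda>i. AE x in M. norm (s i x) \<le> w x) sequentially"
  shows "(\<lambda>i. integral\<^sup>L M (s i)) \<longlonglongrightarrow> integral\<^sup>L M f"
proof -
  obtain N where N: "\<And>i. i \<ge> N \<Longrightarrow> AE x in M. norm (s i x) \<le> w x"
    using bound by (auto simp: eventually_sequentially)
  have "(\<lambda>i. integral\<^sup>L M (s (i + N))) \<longlonglongrightarrow> integral\<^sup>L M f"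
  proof (rule integral_dominated_convergence[where w=w])
    show "AE x in M. (\<lambda>i. s (i + N) x) \<longlonglongrightarrow> f x"
      using lim by eventually_elim (rule LIMSEQ_ignore_initial_segment)
  qed (use assms N in auto)
  then show ?thesis by (rule LIMSEQ_offset)
qed

lemma conv_deriv:
  fixes K :: "'a::euclidean_space \<Rightarrow> real" and DK :: "'a \<Rightarrow> 'a" and g H :: "'a \<Rightarrow> real"
  assumes dK: "\<And>x. (K has_derivative (\<lambda>h. DK x \<bullet> h)) (at x)"
    and cDK: "continuous_on UNIV DK"
    and iK: "integrable lborel K"
    and gm[measurable]: "g \<in> borel_measurable borel" and gb: "\<And>y. \<bar>g y\<bar> \<le> M"
    and \<delta>: "\<delta> > 0" and iH: "integrable lborel H"
    and dom: "\<And>\<zeta> y. \<zeta> \<in> ball z0 \<delta> \<Longrightarrow> norm (DK (\<zeta> - y)) \<le> H y"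
  shows "((\<lambda>z. \<integral>y. K (z - y) * g y \<partial>lborel) has_derivative (\<lambda>h. (\<integral>y. g y *\<^sub>R DK (z0 - y) \<partial>lborel) \<bullet> h)) (at z0)"
    and "isCont (\<lambda>z. \<integral>y. g y *\<^sub>R DK (z - y) \<partial>lborel) z0"
proof -
  have M0: "M \<ge> 0" using gb[of 0] by linarith
  have contK: "continuous_on UNIV K"
    using dK by (meson continuous_at_imp_continuous_on has_derivative_continuous)
  have Km[measurable]: "K \<in> borel_measurable borel" using contK by (rule borel_measurable_continuous_onI)
  have DKm[measurable]: "DK \<in> borel_measurable borel" using cDK by (rule borel_measurable_continuous_onI)
  have Hm[measurable]: "H \<in> borel_measurable lborel" using iH by auto
  have iKz: "integrable lborel (\<lambda>y. K (z - y))" for z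
    using integrable_affine_eucl[OF iK, of "-1" z] by simp
  have iKg: "integrable lborel (\<lambda>y. K (z - y) * g y)" for z
  proof (rule Bochner_Integration.integrable_bound)
    show "integrable lborel (\<lambda>y. M * K (z - y))" using iKz by simp
    show "AE y in lborel. norm (K (z - y) * g y) \<le> norm (M * K (z - y))"
      using gb M0 by (intro AE_I2) (auto simp: abs_mult mult.commute intro!: mult_right_mono)
  qed simp
  have iDK: "integrable lborel (\<lambda>y. g y *\<^sub>R DK (\<zeta> - y))" if "\<zeta> \<in> ball z0 \<delta>" for \<zeta>
  proof (rule Bochner_Integration.integrable_bound)
    show "integrable lborel (\<lambda>y. M * H y)" using iH by simp
    show "AE y in lborel. norm (g y *\<^sub>R DK (\<zeta> - y)) \<le> norm (M * H y)"
    proof (intro AE_I2)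
      fix y
      have "norm (g y *\<^sub>R DK (\<zeta> - y)) = \<bar>g y\<bar> * norm (DK (\<zeta> - y))" by simp
      also have "\<dots> \<le> M * H y" using gb dom[OF that] M0 by (intro mult_mono) auto
      also have "\<dots> \<le> norm (M * H y)" by simp
      finally show "norm (g y *\<^sub>R DK (\<zeta> - y)) \<le> norm (M * H y)" .
    qed
  qed simp
  have z0in: "z0 \<in> ball z0 \<delta>" using \<delta> by simp
  define F where "F = (\<integral>y. g y *\<^sub>R DK (z0 - y) \<partial>lborel)"
  define f where "f = (\<lambda>z. \<integral>y. K (z - y) * g y \<partial>lborel)"
  have mvt: "\<bar>K (\<zeta>1 - y) - K (\<zeta>2 - y)\<bar> \<le> H y * norm (\<zeta>1 - \<zeta>2)"
    if "\<zeta>1 \<in> ball z0 \<delta>" "\<zeta>2 \<in> ball z0 \<delta>" for \<zeta>1 \<zeta>2 y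
  proof -
    have "norm ((\<lambda>\<zeta>. K (\<zeta> - y)) \<zeta>1 - (\<lambda>\<zeta>. K (\<zeta> - y)) \<zeta>2) \<le> H y * norm (\<zeta>1 - \<zeta>2)"
    proof (rule differentiable_bound[where f'="\<lambda>\<zeta> h. DK (\<zeta> - y) \<bullet> h"])
      show "convex (ball z0 \<delta>)" by simp
      show "((\<lambda>\<zeta>. K (\<zeta> - y)) has_derivative (\<lambda>h. DK (\<zeta> - y) \<bullet> h)) (at \<zeta> within ball z0 \<delta>)" for \<zeta>
      proof -
        have "((\<lambda>\<zeta>. \<zeta> - y) has_derivative (\<lambda>h. h)) (at \<zeta>)"
          by (auto intro!: derivative_eq_intros)
        from has_derivative_compose[OF this dK]
        show ?thesis by (auto intro: has_derivative_at_withinI simp: o_def)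
      qed
      show "onorm (\<lambda>h. DK (\<zeta> - y) \<bullet> h) \<le> H y" if "\<zeta> \<in> ball z0 \<delta>" for \<zeta>
      proof (rule onorm_le)
        fix h
        have "norm (DK (\<zeta> - y) \<bullet> h) \<le> norm (DK (\<zeta> - y)) * norm h"
          by (simp add: Cauchy_Schwarz_ineq2)
        also have "\<dots> \<le> H y * norm h" using dom[OF that] by (intro mult_right_mono) auto
        finally show "norm (DK (\<zeta> - y) \<bullet> h) \<le> H y * norm h" .
      qed
    qed (use that in auto)
    then show ?thesis by simp
  qed
  have "(f has_derivative (\<lambda>h. F \<bullet> h)) (at z0)"
    unfolding has_derivative_def
  proof (intro conjI)
    show "bounded_linear ((\<bullet>) F)" by (rule bounded_linear_inner_right)
    define \<phi> where "\<phi> y = (f y - f z0 - F \<bullet> (y - z0)) /\<^sub>R norm (y - z0)" for y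
    have "(\<phi> \<longlongrightarrow> 0) (at z0)"
      unfolding tendsto_at_iff_sequentially
    proof (intro allI impI)
      fix X assume Xne: "\<forall>i. X i \<in> UNIV - {z0}" and X: "X \<longlonglongrightarrow> z0"
      define R where "R i y = (K (X i - y) - K (z0 - y) - DK (z0 - y) \<bullet> (X i - z0)) * g y / norm (X i - z0)" for i y
      have nz: "norm (X i - z0) > 0" for i using Xne by auto
      have iR: "integrable lborel (\<lambda>y. DK (z0 - y) \<bullet> (X i - z0) * g y)" for i
      proof -
        have "integrable lborel (\<lambda>y. (g y *\<^sub>R DK (z0 - y)) \<bullet> (X i - z0))"
          using iDK[OF z0in] by (rule integrable_inner_left)
        then show ?thesis by (simp add: mult.commute)
      qed
      have eq: "((\<lambda>y. (f y - f z0 - F \<bullet> (y - z0)) /\<^sub>R norm (y - z0)) \<circ> X) i = (\<integral>y. R i y \<partial>lborel)" for i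
      proof -
        have "F \<bullet> (X i - z0) = (\<integral>y. DK (z0 - y) \<bullet> (X i - z0) * g y \<partial>lborel)"
          unfolding F_def using iDK[OF z0in]
          by (subst integral_inner_left[symmetric]) (auto simp: mult.commute)
        moreover have "(\<integral>y. R i y \<partial>lborel) = ((\<integral>y. K (X i - y) * g y \<partial>lborel) - (\<integral>y. K (z0 - y) * g y \<partial>lborel)
              - (\<integral>y. DK (z0 - y) \<bullet> (X i - z0) * g y \<partial>lborel)) / norm (X i - z0)"
          unfolding R_def using iKg iR
          by (simp add: left_diff_distrib Bochner_Integration.integral_diff)
        ultimately show ?thesis by (simp add: f_def divide_inverse mult.commute)
      qed
      have "(\<lambda>i. \<integral>y. R i y \<partial>lborel) \<longlonglongrightarrow> (\<integral>y. (0::real) \<partial>(lborel::'a measure))"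
      proof (rule dc_ev[where w="\<lambda>y. 2 * M * H y"])
        show "(\<lambda>y. 0::real) \<in> borel_measurable lborel" by simp
        show "R i \<in> borel_measurable lborel" for i unfolding R_def by measurable
        show "integrable lborel (\<lambda>y. 2 * M * H y)" using iH by simp
        show "AE y in lborel. (\<lambda>i. R i y) \<longlonglongrightarrow> 0"
        proof (intro AE_I2)
          fix y
          have "((\<lambda>u. (K u - K (z0 - y) - DK (z0 - y) \<bullet> (u - (z0 - y))) /\<^sub>R norm (u - (z0 - y))) \<longlongrightarrow> 0) (at (z0 - y))"
            using dK[of "z0 - y"] unfolding has_derivative_def Lim_ident_at by simp
          then have "((\<lambda>u. (K u - K (z0 - y) - DK (z0 - y) \<bullet> (u - (z0 - y))) /\<^sub>R norm (u - (z0 - y))) \<circ> (\<lambda>i. X i - y)) \<longlonglongrightarrow> 0"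
            unfolding tendsto_at_iff_sequentially
          proof (elim allE impE)
            show "\<forall>i. X i - y \<in> UNIV - {z0 - y}" using Xne by auto
            show "(\<lambda>i. X i - y) \<longlonglongrightarrow> z0 - y" using X by (intro tendsto_diff tendsto_const)
          qed
          then have "(\<lambda>i. (K (X i - y) - K (z0 - y) - DK (z0 - y) \<bullet> (X i - z0)) / norm (X i - z0) * g y) \<longlonglongrightarrow> 0 * g y"
            by (intro tendsto_mult) (auto simp: o_def divide_inverse mult.commute algebra_simps)
          then show "(\<lambda>i. R i y) \<longlonglongrightarrow> 0" by (simp add: R_def mult_ac divide_inverse)
        qed
        have ev: "eventually (\<lambda>i. X i \<in> ball z0 \<delta>) sequentially"
          using X \<delta> by (auto simp: tendsto_iff dist_commute)
        show "eventually (\<lambda>i. AE y in lborel. norm (R i y) \<le> 2 * M * H y) sequentially"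
          using ev
        proof eventually_elim
          case (elim i)
          show ?case
          proof (intro AE_I2)
            fix y
            have "\<bar>K (X i - y) - K (z0 - y) - DK (z0 - y) \<bullet> (X i - z0)\<bar> \<le> \<bar>K (X i - y) - K (z0 - y)\<bar> + \<bar>DK (z0 - y) \<bullet> (X i - z0)\<bar>"
              by linarith
            also have "\<dots> \<le> H y * norm (X i - z0) + H y * norm (X i - z0)"
              using mvt[OF elim z0in, of y] dom[OF z0in, of y]
              by (intro add_mono) (auto intro!: order_trans[OF Cauchy_Schwarz_ineq2] mult_right_mono)
            finally have a: "\<bar>K (X i - y) - K (z0 - y) - DK (z0 - y) \<bullet> (X i - z0)\<bar> / norm (X i - z0) \<le> 2 * H y"
              using nz[of i] by (simp add: divide_le_eq)
            have H0: "0 \<le> H y" using dom[OF z0in, of y] norm_ge_zero order_trans by blast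
            have "norm (R i y) = \<bar>K (X i - y) - K (z0 - y) - DK (z0 - y) \<bullet> (X i - z0)\<bar> / norm (X i - z0) * \<bar>g y\<bar>"
              by (simp add: R_def abs_mult)
            also have "\<dots> \<le> 2 * H y * M" using a gb[of y] H0 by (intro mult_mono) auto
            finally show "norm (R i y) \<le> 2 * M * H y" by (simp add: mult_ac)
          qed
        qed
      qed measurable
      then have "(\<lambda>i. ((\<lambda>y. (f y - f z0 - F \<bullet> (y - z0)) /\<^sub>R norm (y - z0)) \<circ> X) i) \<longlonglongrightarrow> 0"
        by (simp only: eq) simp
      then show "(\<phi> \<circ> X) \<longlonglongrightarrow> 0"
        by (simp add: o_def \<phi>_def)
    qed
    then show "((\<lambda>y. (f y - f (Lim (at z0) (\<lambda>x. x)) - F \<bullet> (y - Lim (at z0) (\<lambda>x. x))) /\<^sub>R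
            norm (y - Lim (at z0) (\<lambda>x. x))) \<longlongrightarrow> 0) (at z0)"
      by (simp add: \<phi>_def[abs_def] Lim_ident_at)
  qed
  then show "((\<lambda>z. \<integral>y. K (z - y) * g y \<partial>lborel) has_derivative (\<lambda>h. (\<integral>y. g y *\<^sub>R DK (z0 - y) \<partial>lborel) \<bullet> h)) (at z0)"
    by (simp add: f_def F_def)
  show "isCont (\<lambda>z. \<integral>y. g y *\<^sub>R DK (z - y) \<partial>lborel) z0"
    unfolding continuous_at_sequentially
  proof (intro allI impI)
    fix X assume X: "X \<longlonglongrightarrow> z0"
    have "(\<lambda>i. \<integral>y. g y *\<^sub>R DK (X i - y) \<partial>lborel) \<longlonglongrightarrow> (\<integral>y. g y *\<^sub>R DK (z0 - y) \<partial>lborel)"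
    proof (rule dc_ev[where w="\<lambda>y. M * H y"])
      show "integrable lborel (\<lambda>y. M * H y)" using iH by simp
      show "AE y in lborel. (\<lambda>i. g y *\<^sub>R DK (X i - y)) \<longlonglongrightarrow> g y *\<^sub>R DK (z0 - y)"
      proof (intro AE_I2 tendsto_scaleR tendsto_const)
        fix y
        have "isCont DK (z0 - y)" using cDK by (simp add: continuous_on_eq_continuous_at)
        then show "(\<lambda>i. DK (X i - y)) \<longlonglongrightarrow> DK (z0 - y)"
          by (rule isCont_tendsto_compose) (intro tendsto_diff X tendsto_const)
      qed
      have ev: "eventually (\<lambda>i. X i \<in> ball z0 \<delta>) sequentially"
        using X \<delta> by (auto simp: tendsto_iff dist_commute)
      show "eventually (\<lambda>i. AE y in lborel. norm (g y *\<^sub>R DK (X i - y)) \<le> M * H y) sequentially"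
        using ev
      proof eventually_elim
        case (elim i)
        show ?case using gb dom[OF elim] M0 by (intro AE_I2) (auto intro!: mult_mono)
      qed
    qed measurable
    then show "((\<lambda>z. \<integral>y. g y *\<^sub>R DK (z - y) \<partial>lborel) \<circ> X) \<longlonglongrightarrow> (\<integral>y. g y *\<^sub>R DK (z0 - y) \<partial>lborel)"
      by (simp add: o_def)
  qed
qed



lemma C1_graph_from_deriv:
  fixes w :: "(real^'m::finite) \<times> real \<Rightarrow> real" and F :: "(real^'m) \<times> real \<Rightarrow> (real^'m) \<times> real"
  assumes oB: "open B" and cB: "convex B"
    and dw: "\<And>z. z \<in> B \<Longrightarrow> (w has_derivative (\<lambda>v. F z \<bullet> v)) (at z)"
    and cF: "continuous_on B F"
    and pos: "\<And>z. z \<in> B \<Longrightarrow> snd (F z) > 0"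
  shows "C1_graph_set ({z. w z = 0} \<inter> B)"
proof -
  define Z where "Z = {z. w z = 0} \<inter> B"
  have partial: "((\<lambda>h. w (x, h)) has_real_derivative snd (F (x, y))) (at y)" if "(x, y) \<in> B" for x y
  proof -
    have "((\<lambda>h. (x, h)) has_derivative (\<lambda>h. (0, h))) (at y)"
      by (auto intro!: derivative_eq_intros)
    from has_derivative_compose[OF this dw[OF that]]
    have "((\<lambda>h. w (x, h)) has_derivative (\<lambda>h. F (x, y) \<bullet> (0, h))) (at y)" by (simp add: o_def)
    moreover have "(\<lambda>h. F (x, y) \<bullet> (0, h)) = (*) (snd (F (x, y)))"
      by (auto simp: inner_Pair_0)
    ultimately show ?thesis by (simp add: has_field_derivative_def)
  qed
  have uniq: "y1 = y2" if "(x, y1) \<in> Z" "(x, y2) \<in> Z" for x y1 y2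
  proof -
    have less: False if a: "(x, a) \<in> Z" "(x, b) \<in> Z" "a < b" for a b
    proof -
      have "w (x, a) < w (x, b)"
      proof (rule DERIV_pos_imp_increasing[OF \<open>a < b\<close>])
        fix y assume y: "a \<le> y" "y \<le> b"
        define \<theta> where "\<theta> = (y - a) / (b - a)"
        have th: "0 \<le> \<theta>" "\<theta> \<le> 1" using y \<open>a < b\<close> by (auto simp: \<theta>_def field_simps)
        have "(1 - \<theta>) *\<^sub>R (x, a) + \<theta> *\<^sub>R (x, b) \<in> B"
          using a th by (intro convexD[OF cB]) (auto simp: Z_def)
        moreover have "(1 - \<theta>) *\<^sub>R (x, a) + \<theta> *\<^sub>R (x, b) = (x, y)"
          using \<open>a < b\<close> by (simp add: \<theta>_def algebra_simps) (simp add: field_simps)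
        ultimately have "(x, y) \<in> B" by simp
        then show "\<exists>D. ((\<lambda>h. w (x, h)) has_real_derivative D) (at y) \<and> 0 < D"
          using partial pos by blast
      qed
      then show False using a by (simp add: Z_def)
    qed
    show ?thesis
      using less[of y1 y2] less[of y2 y1] that by (cases y1 y2 rule: linorder_cases) auto
  qed
  define U where "U = fst ` Z"
  define g where "g x = (THE y. (x, y) \<in> Z)" for x
  have gZ: "(x, g x) \<in> Z" if xU: "x \<in> U" for x
  proof -
    obtain z where z: "z \<in> Z" "x = fst z" using xU unfolding U_def by blast
    then have "(x, snd z) \<in> Z" by simp
    then show ?thesis unfolding g_def by (rule theI) (rule uniq[OF _ \<open>(x, snd z) \<in> Z\<close>])
  qed
  have geq: "g x = y" if "(x, y) \<in> Z" for x y
    unfolding g_def by (rule the_equality[where P="\<lambda>y. (x, y) \<in> Z", OF that]) (rule uniq[OF _ that], assumption)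
  have Zeq: "Z = (\<lambda>x. (x, g x)) ` U"
  proof
    show "Z \<subseteq> (\<lambda>x. (x, g x)) ` U"
    proof
      fix z assume "z \<in> Z"
      then show "z \<in> (\<lambda>x. (x, g x)) ` U"
        using geq[of "fst z" "snd z"] by (auto simp: U_def image_iff intro!: bexI[of _ z])
    qed
    show "(\<lambda>x. (x, g x)) ` U \<subseteq> Z" using gZ by auto
  qed
  define Dg where "Dg x = - (1 / snd (F (x, g x))) *\<^sub>R fst (F (x, g x))" for x
  have local: "\<exists>W. open W \<and> x0 \<in> W \<and> W \<subseteq> U \<and> (g has_derivative (\<lambda>h. Dg x0 \<bullet> h)) (at x0)"
    if x0: "x0 \<in> U" for x0
  proof -
    define z0 where "z0 = (x0, g x0)"
    have z0Z: "z0 \<in> Z" using gZ[OF x0] by (simp add: z0_def)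
    have z0B: "z0 \<in> B" using z0Z by (simp add: Z_def)
    define \<Phi> where "\<Phi> z = (fst z, w z)" for z
    define L where "L z v = (fst v, F z \<bullet> v)" for z v
    have bl: "bounded_linear (L z)" for z
      unfolding L_def by (intro bounded_linear_Pair bounded_linear_fst bounded_linear_inner_right)
    define \<Phi>' where "\<Phi>' z = Blinfun (L z)" for z
    have \<Phi>'_apply: "blinfun_apply (\<Phi>' z) = L z" for z
      unfolding \<Phi>'_def using bl by (rule bounded_linear_Blinfun_apply)
    have d\<Phi>: "(\<Phi> has_derivative blinfun_apply (\<Phi>' z)) (at z)" if "z \<in> B" for z
      unfolding \<Phi>'_apply \<Phi>_def[abs_def] L_def
      by (rule has_derivative_Pair) (auto intro!: derivative_eq_intros dw[OF that])
    have c\<Phi>': "continuous_on B \<Phi>'"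
      unfolding continuous_on_iff
    proof (intro ballI allI impI)
      fix x e assume x: "x \<in> B" and e: "(0::real) < e"
      obtain d where d: "d > 0" "\<forall>x'\<in>B. dist x' x < d \<longrightarrow> dist (F x') (F x) < e"
        using cF x e unfolding continuous_on_iff by blast
      have "dist (\<Phi>' x') (\<Phi>' x) \<le> dist (F x') (F x)" for x'
      proof -
        have "norm (\<Phi>' x' - \<Phi>' x) \<le> norm (F x' - F x)"
        proof (rule norm_blinfun_bound)
          fix v
          have "norm (blinfun_apply (\<Phi>' x' - \<Phi>' x) v) = \<bar>(F x' - F x) \<bullet> v\<bar>"
            by (simp add: blinfun.diff_left \<Phi>'_apply L_def inner_diff_left)
          also have "\<dots> \<le> norm (F x' - F x) * norm v" by (rule Cauchy_Schwarz_ineq2)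
          finally show "norm (blinfun_apply (\<Phi>' x' - \<Phi>' x) v) \<le> norm (F x' - F x) * norm v" .
        qed simp
        then show ?thesis by (simp add: dist_norm)
      qed
      then show "\<exists>d>0. \<forall>x'\<in>B. dist x' x < d \<longrightarrow> dist (\<Phi>' x') (\<Phi>' x) < e"
        using d by (meson le_less_trans)
    qed
    define a where "a = fst (F z0)"
    define b where "b = snd (F z0)"
    have b0: "b > 0" using pos[OF z0B] by (simp add: b_def)
    define M where "M v = (fst v, (snd v - a \<bullet> fst v) / b)" for v :: "(real^'m) \<times> real"
    have bl1: "bounded_linear (\<lambda>x::(real^'m)\<times>real. snd x - a \<bullet> fst x)"
      by (intro bounded_linear_sub bounded_linear_snd bounded_linear_compose[OF bounded_linear_inner_right bounded_linear_fst])
    have bl2: "bounded_linear (\<lambda>x::(real^'m)\<times>real. (snd x - a \<bullet> fst x) / b)"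
      using bounded_linear_compose[OF bounded_linear_divide[of b] bl1] by simp
    have blM: "bounded_linear M"
      unfolding M_def by (intro bounded_linear_Pair bounded_linear_fst bl2)
    have inv: "Blinfun M o\<^sub>L \<Phi>' z0 = id_blinfun"
    proof (rule blinfun_eqI)
      fix v :: "(real^'m) \<times> real"
      obtain v1 v2 where v: "v = (v1, v2)" by (cases v)
      obtain f1 f2 where Fz: "F z0 = (f1, f2)" by (cases "F z0")
      show "blinfun_apply (Blinfun M o\<^sub>L \<Phi>' z0) v = blinfun_apply id_blinfun v"
        using b0 by (simp add: bounded_linear_Blinfun_apply[OF blM] \<Phi>'_apply L_def M_def v
            a_def b_def inner_Pair Fz)
    qed
    have "\<exists>U' V \<Psi> \<Psi>'. open U' \<and> U' \<subseteq> B \<and> z0 \<in> U' \<and> open V \<and> \<Phi> z0 \<in> V \<and> homeomorphism U' V \<Phi> \<Psi>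
       \<and> (\<forall>y\<in>V. (\<Psi> has_derivative (\<Psi>' y)) (at y))"
    proof (rule inverse_function_theorem[OF oB d\<Phi> c\<Phi>' z0B inv])
      fix U' V g g'
      assume a: "open U'" "U' \<subseteq> B" "z0 \<in> U'" "open V" "\<Phi> z0 \<in> V" "homeomorphism U' V \<Phi> g"
        "\<And>y. y \<in> V \<Longrightarrow> (g has_derivative g' y) (at y)"
      show ?thesis
        by (rule exI[of _ U'], rule exI[of _ V], rule exI[of _ g], rule exI[of _ g']) (use a in auto)
    qed
    then obtain U' V \<Psi> \<Psi>' where U': "open U'" "U' \<subseteq> B" "z0 \<in> U'" and V: "open V" "\<Phi> z0 \<in> V"
      and hom: "homeomorphism U' V \<Phi> \<Psi>"
      and d\<Psi>': "\<forall>y\<in>V. (\<Psi> has_derivative (\<Psi>' y)) (at y)"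
      by blast
    have d\<Psi>: "(\<Psi> has_derivative (\<Psi>' y)) (at y)" if "y \<in> V" for y using d\<Psi>' that by blast
    define W where "W = (\<lambda>x. (x, 0::real)) -` V"
    have oW: "open W" unfolding W_def
      by (rule continuous_open_vimage[OF V(1)]) (auto intro!: continuous_intros)
    have x0W: "x0 \<in> W" using V(2) z0Z by (simp add: W_def \<Phi>_def z0_def Z_def)
    have inW: "x \<in> U \<and> g x = snd (\<Psi> (x, 0))" if "x \<in> W" for x
    proof -
      have xV: "(x, 0) \<in> V" using that by (simp add: W_def)
      have "\<Psi> (x, 0) \<in> U'" using hom xV unfolding homeomorphism_def by blast
      then have PB: "\<Psi> (x, 0) \<in> B" using U' by blast
      have "\<Phi> (\<Psi> (x, 0)) = (x, 0)" using hom xV unfolding homeomorphism_def by blast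
      then have e1: "fst (\<Psi> (x, 0)) = x" and e2: "w (\<Psi> (x, 0)) = 0" by (auto simp: \<Phi>_def)
      have "(x, snd (\<Psi> (x, 0))) \<in> Z" using PB e1 e2 by (auto simp: Z_def) (metis prod.collapse)+
      then show ?thesis using geq by (force simp: U_def)
    qed
    have WU: "W \<subseteq> U" using inW by blast
    define G where "G x = snd (\<Psi> (x, 0))" for x
    have z0V: "(x0, 0) \<in> V" using x0W by (simp add: W_def)
    have dG: "(G has_derivative (\<lambda>h. snd (\<Psi>' (x0, 0) (h, 0)))) (at x0)"
    proof -
      have "((\<lambda>x. (x, 0::real)) has_derivative (\<lambda>h. (h, 0))) (at x0)"
        by (auto intro!: derivative_eq_intros)
      from has_derivative_compose[OF this d\<Psi>[OF z0V]]
      have "((\<lambda>x. \<Psi> (x, 0)) has_derivative (\<lambda>h. \<Psi>' (x0, 0) (h, 0))) (at x0)" by (simp add: o_def)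
      from has_derivative_snd[OF this] show ?thesis by (simp add: G_def[abs_def])
    qed
    have dg: "(g has_derivative (\<lambda>h. snd (\<Psi>' (x0, 0) (h, 0)))) (at x0)"
      by (rule has_derivative_transform_within_open[OF dG oW x0W]) (use inW G_def in auto)
    define Lg where "Lg h = snd (\<Psi>' (x0, 0) (h, 0))" for h
    have dwg: "((\<lambda>x. w (x, g x)) has_derivative (\<lambda>h. F z0 \<bullet> (h, Lg h))) (at x0)"
    proof -
      have "((\<lambda>x. (x, g x)) has_derivative (\<lambda>h. (h, Lg h))) (at x0)"
        unfolding Lg_def by (intro has_derivative_Pair has_derivative_ident dg)
      from has_derivative_compose[OF this dw[OF z0B[unfolded z0_def]]]
      show ?thesis by (simp add: o_def z0_def)
    qed
    have dwg0: "((\<lambda>x. w (x, g x)) has_derivative (\<lambda>h. 0)) (at x0)"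
    proof (rule has_derivative_transform_within_open[OF has_derivative_const oW x0W])
      fix x assume "x \<in> W"
      then have "(x, g x) \<in> Z" using gZ inW by blast
      then show "0 = w (x, g x)" by (simp add: Z_def)
    qed
    have feq: "(\<lambda>h. F z0 \<bullet> (h, Lg h)) = (\<lambda>h. 0)" by (rule has_derivative_unique[OF dwg dwg0])
    have e0: "F z0 \<bullet> (h, Lg h) = 0" for h using fun_cong[OF feq, of h] by simp
    have e1: "a \<bullet> h + b * Lg h = 0" for h
      using e0[of h] by (cases "F z0") (simp add: a_def b_def inner_Pair)
    have "Lg h = Dg x0 \<bullet> h" for h
    proof -
      have "Lg h = - (a \<bullet> h) / b" using e1[of h] b0 by (simp add: field_simps)
      also have "\<dots> = Dg x0 \<bullet> h" by (simp add: Dg_def a_def b_def z0_def)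
      finally show ?thesis .
    qed
    then have "(g has_derivative (\<lambda>h. Dg x0 \<bullet> h)) (at x0)"
      using dg unfolding Lg_def by (metis (no_types, lifting) ext)
    then show ?thesis using oW x0W WU by blast
  qed
  have oU: "open U"
    unfolding open_subopen[of U] using local by blast
  have dgU: "\<forall>x\<in>U. (g has_derivative (\<lambda>h. Dg x \<bullet> h)) (at x)" using local by blast
  have cg: "continuous_on U g"
    using dgU by (meson continuous_at_imp_continuous_on has_derivative_continuous)
  have imgB: "(\<lambda>x. (x, g x)) ` U \<subseteq> B" using gZ by (auto simp: Z_def)
  have cFg: "continuous_on U (\<lambda>x. F (x, g x))"
    by (rule continuous_on_compose2[OF cF _ imgB]) (auto intro!: continuous_intros cg)
  have nz: "\<forall>x\<in>U. snd (F (x, g x)) \<noteq> 0" using pos imgB by (metis image_subset_iff less_irrefl)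
  have cD: "continuous_on U Dg"
    unfolding Dg_def using cFg nz
    by (auto intro!: continuous_intros)
  show ?thesis
    unfolding C1_graph_set_def using oU dgU cD Zeq by (auto simp: Z_def)
qed


lemma deriv_dirN:
  fixes f :: "(real^'m::finite) \<times> real \<Rightarrow> real"
  assumes "(f has_derivative (\<lambda>v. F \<bullet> v)) (at z)"
  shows "((\<lambda>h. f (z + (0, h))) has_real_derivative snd F) (at 0)"
proof -
  have d1: "((\<lambda>h. z + (0, h)) has_derivative (\<lambda>h. (0, h))) (at 0)"
    by (auto intro!: derivative_eq_intros)
  have d2: "(f has_derivative (\<lambda>v. F \<bullet> v)) (at (z + (0, 0)))" using assms by (simp add: zero_prod_def[symmetric])
  have "((\<lambda>h. f (z + (0, h))) has_derivative (\<lambda>h. F \<bullet> (0, h))) (at 0)"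
    using has_derivative_compose[OF d1 d2] by simp
  moreover have "(\<lambda>h. F \<bullet> (0, h)) = (*) (snd F)"
    by (auto simp: inner_Pair_0)
  ultimately show ?thesis by (simp add: has_field_derivative_def)
qed

lemma integrable_conv:
  fixes K g :: "'a::euclidean_space \<Rightarrow> real"
  assumes iK: "integrable lborel K" and gm[measurable]: "g \<in> borel_measurable borel" and gb: "\<And>y. \<bar>g y\<bar> \<le> M"
  shows "integrable lborel (\<lambda>y. K (z - y) * g y)"
proof (rule Bochner_Integration.integrable_bound)
  have M0: "M \<ge> 0" using gb[of 0] by linarith
  have iKz: "integrable lborel (\<lambda>y. K (z - y))"
    using integrable_affine_eucl[OF iK, of "-1" z] by simp
  show "integrable lborel (\<lambda>y. M * K (z - y))" using iKz by simp
  show "AE y in lborel. norm (K (z - y) * g y) \<le> norm (M * K (z - y))"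
    using gb M0 by (intro AE_I2) (auto simp: abs_mult mult.commute intro!: mult_right_mono)
  have "K \<in> borel_measurable lborel" using iK by auto
  then have [measurable]: "K \<in> borel_measurable borel" by simp
  show "(\<lambda>y. K (z - y) * g y) \<in> borel_measurable lborel" by measurable
qed

lemma null_hyperplane:
  "{u :: (real^'m::finite) \<times> real. snd u = 0} \<in> null_sets lborel"
proof -
  have eq: "{u :: (real^'m) \<times> real. snd u = 0} = UNIV \<times> {0}" by auto
  have "emeasure (lborel \<Otimes>\<^sub>M lborel) ((UNIV :: (real^'m) set) \<times> {0::real}) = emeasure lborel (UNIV :: (real^'m) set) * emeasure lborel {0::real}"
    by (rule sigma_finite_measure.emeasure_pair_measure_Times) (auto intro: sigma_finite_lborel)
  also have "\<dots> = 0" by simp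
  finally have "emeasure (lborel :: ((real^'m) \<times> real) measure) (UNIV \<times> {0}) = 0"
    by (simp add: lborel_prod)
  moreover have "(UNIV :: (real^'m) set) \<times> {0::real} \<in> sets (borel :: ((real^'m) \<times> real) measure)"
    by (intro borel_closed closed_Times) auto
  ultimately show ?thesis unfolding eq by (auto simp: null_sets_def)
qed



lemma cyl_eq: "cyl r = ball (0::real^'m::finite) r \<times> {-r<..<r}"
  by (auto simp: cyl_def)

lemma bad_set:
  fixes E :: "((real^'m::finite) \<times> real) set" and \<gamma> :: "real^'m \<Rightarrow> real"
  assumes Eeq: "E \<inter> cyl r = {(y', yN). (y', yN) \<in> cyl r \<and> yN > \<gamma> y'}"
    and c\<gamma>: "continuous_on (ball 0 r) \<gamma>"
    and y: "norm y < r" and big: "\<bar>snd y\<bar> > \<bar>\<gamma> (fst y)\<bar>"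
  shows "tauE E y = (if snd y > 0 then 1 else -1)"
proof -
  obtain y1 y2 where yy: "y = (y1, y2)" by (cases y)
  have "norm y1 < r" using y yy norm_fst_le[of y1 y2] by (metis le_less_trans)
  moreover have "\<bar>y2\<bar> < r" using y yy norm_snd_le[of y2 y1] by (metis le_less_trans real_norm_def)
  ultimately have ycyl: "y \<in> cyl r" using yy by (auto simp: cyl_def)
  have ocyl: "open (cyl r)" by (simp add: cyl_eq open_Times)
  show ?thesis
  proof (cases "y2 > 0")
    case True
    then have "y2 > \<gamma> y1" using big yy by auto
    then have "y \<in> E" using Eeq ycyl yy by blast
    then show ?thesis using True yy closure_subset[of E]
      by (auto simp: tauE_def indicator_def)
  next
    case False
    then have neg: "y2 < \<gamma> y1" "y2 \<le> 0" using big yy by auto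
    define Ob where "Ob = cyl r \<inter> (\<lambda>v. \<gamma> (fst v) - snd v) -` {0<..}"
    have "continuous_on (cyl r) (\<lambda>v. \<gamma> (fst v) - snd v)"
    proof (intro continuous_intros continuous_on_compose2[OF c\<gamma>])
      show "fst ` cyl r \<subseteq> ball 0 r" by (auto simp: cyl_def)
    qed
    then have "open ((\<lambda>v. \<gamma> (fst v) - snd v) -` {0<..} \<inter> cyl r)"
      using continuous_on_open_vimage[OF ocyl] open_greaterThan by blast
    then have oO: "open Ob" unfolding Ob_def by (simp add: Int_commute)
    have yO: "y \<in> Ob" using ycyl neg yy by (auto simp: Ob_def)
    have "Ob \<inter> E = {}"
    proof (rule ccontr)
      assume "Ob \<inter> E \<noteq> {}"
      then obtain v where v: "v \<in> Ob" "v \<in> E" by blast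
      then have "v \<in> E \<inter> cyl r" by (auto simp: Ob_def)
      then have "snd v > \<gamma> (fst v)" using Eeq by (cases v) auto
      then show False using v by (auto simp: Ob_def)
    qed
    then have "Ob \<inter> closure E = {}" using open_Int_closure_eq_empty[OF oO] by blast
    then have "y \<notin> closure E" "y \<notin> E" using yO closure_subset[of E] by auto
    then show ?thesis using False yy by (auto simp: tauE_def indicator_def)
  qed
qed

lemma eps_lemma:
  fixes G :: "(real^'m::finite) \<times> real \<Rightarrow> real" and Cg r \<beta> :: real
  assumes iG: "integrable lborel G" and G0: "\<And>u. 0 \<le> G u" and r: "r > 0" and \<beta>: "\<beta> > 0"
  defines "Bs a \<equiv> {u :: (real^'m) \<times> real. a * r \<le> norm u \<or> \<bar>snd u\<bar> \<le> Cg * a powr (-\<beta>) * norm (fst u) powr (1+\<beta>)}"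
  shows "(\<lambda>n. \<integral>u. G u * indicator (Bs (real n + 1)) u \<partial>lborel) \<longlonglongrightarrow> 0"
proof -
  have "G \<in> borel_measurable lborel" using iG by (rule borel_measurable_integrable)
  then have Gm[measurable]: "G \<in> borel_measurable borel" by simp
  have cpw: "continuous_on UNIV (\<lambda>u::(real^'m)\<times>real. norm (fst u) powr (1+\<beta>))"
    by (rule continuous_on_powr') (use \<beta> in \<open>auto intro!: continuous_intros\<close>)
  have Bsm[measurable]: "Bs X \<in> sets borel" for X
  proof -
    have cR: "continuous_on UNIV (\<lambda>u::(real^'m)\<times>real. Cg * X powr (-\<beta>) * norm (fst u) powr (1+\<beta>))"
      using continuous_on_mult[OF continuous_on_const cpw] by simp
    have "closed (Bs X)" unfolding Bs_def
      by (intro closed_Collect_disj closed_Collect_le cR) (auto intro!: continuous_intros)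
    then show ?thesis by (rule borel_closed)
  qed
  have "(\<lambda>n. \<integral>u. G u * indicator (Bs (real n + 1)) u \<partial>lborel) \<longlonglongrightarrow> (\<integral>u. (0::real) \<partial>(lborel :: ((real^'m) \<times> real) measure))"
  proof (rule integral_dominated_convergence[where w=G])
    show "AE u in lborel. (\<lambda>n. G u * indicator (Bs (real n + 1)) u) \<longlonglongrightarrow> 0"
    proof (rule AE_I'[OF null_hyperplane], safe)
      fix u :: "(real^'m) \<times> real"
      assume nc: "\<not> (\<lambda>n. G u * indicator (Bs (real n + 1)) u) \<longlonglongrightarrow> 0"
      show "snd u = 0"
      proof (rule ccontr)
        assume su: "snd u \<noteq> 0"
        obtain N1 :: nat where N1: "norm u / r < real N1" using reals_Archimedean2 by blast
        have lim1: "(\<lambda>n. (real n + 1) powr (-\<beta>)) \<longlonglongrightarrow> 0"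
        proof (rule tendsto_neg_powr)
          show "- \<beta> < 0" using \<beta> by simp
          show "filterlim (\<lambda>n. real n + 1) at_top sequentially"
            using filterlim_tendsto_add_at_top[OF tendsto_const filterlim_real_sequentially, of 1]
            by (simp add: add.commute)
        qed
        have "(\<lambda>n. Cg * (real n + 1) powr (-\<beta>) * norm (fst u) powr (1+\<beta>)) \<longlonglongrightarrow> Cg * 0 * norm (fst u) powr (1+\<beta>)"
          by (intro tendsto_mult tendsto_const lim1)
        then have ev1: "eventually (\<lambda>n. Cg * (real n + 1) powr (-\<beta>) * norm (fst u) powr (1+\<beta>) < \<bar>snd u\<bar>) sequentially"
          using su by (intro order_tendstoD(2)) auto
        have ev2: "eventually (\<lambda>n. n \<ge> N1) sequentially" by (rule eventually_ge_at_top)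
        have "eventually (\<lambda>n. G u * indicator (Bs (real n + 1)) u = 0) sequentially"
          using ev1 ev2
        proof eventually_elim
          case (elim n)
          have "norm u < real N1 * r" using N1 r by (simp add: divide_less_eq)
          also have "\<dots> \<le> (real n + 1) * r" using elim(2) r by (intro mult_right_mono) auto
          finally have "u \<notin> Bs (real n + 1)" using elim(1) by (auto simp: Bs_def)
          then show ?case by simp
        qed
        then have "(\<lambda>n. G u * indicator (Bs (real n + 1)) u) \<longlonglongrightarrow> 0" by (rule tendsto_eventually)
        then show False using nc by simp
      qed
    qed
    show "AE u in lborel. norm (G u * indicator (Bs (real n + 1)) u) \<le> G u" for n
      using G0 by (intro AE_I2) (auto simp: indicator_def)
    show "integrable lborel G" by (rule iG)
    show "(\<lambda>u. 0::real) \<in> borel_measurable lborel" by simp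
    show "(\<lambda>u. G u * indicator (Bs (real n + 1)) u) \<in> borel_measurable lborel" for n by measurable
  qed
  then show ?thesis by simp
qed

lemma eps_mono:
  fixes G :: "(real^'m::finite) \<times> real \<Rightarrow> real" and Cg r \<beta> :: real
  assumes iG: "integrable lborel G" and G0: "\<And>u. 0 \<le> G u" and r: "r > 0" and \<beta>: "\<beta> > 0" and Cg: "Cg \<ge> 0"
    and ab: "0 < b" "b \<le> a"
  defines "Bs c \<equiv> {u :: (real^'m) \<times> real. c * r \<le> norm u \<or> \<bar>snd u\<bar> \<le> Cg * c powr (-\<beta>) * norm (fst u) powr (1+\<beta>)}"
  shows "(\<integral>u. G u * indicator (Bs a) u \<partial>lborel) \<le> (\<integral>u. G u * indicator (Bs b) u \<partial>lborel)"
proof -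
  have "G \<in> borel_measurable lborel" using iG by (rule borel_measurable_integrable)
  then have Gm[measurable]: "G \<in> borel_measurable borel" by simp
  have cpw: "continuous_on UNIV (\<lambda>u::(real^'m)\<times>real. norm (fst u) powr (1+\<beta>))"
    by (rule continuous_on_powr') (use \<beta> in \<open>auto intro!: continuous_intros\<close>)
  have Bsm[measurable]: "Bs X \<in> sets borel" for X
  proof -
    have cR: "continuous_on UNIV (\<lambda>u::(real^'m)\<times>real. Cg * X powr (-\<beta>) * norm (fst u) powr (1+\<beta>))"
      using continuous_on_mult[OF continuous_on_const cpw] by simp
    have "closed (Bs X)" unfolding Bs_def
      by (intro closed_Collect_disj closed_Collect_le cR) (auto intro!: continuous_intros)
    then show ?thesis by (rule borel_closed)
  qed
  have iGB: "integrable lborel (\<lambda>u. G u * indicator (Bs c) u)" for c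
    by (rule Bochner_Integration.integrable_bound[OF iG]) (auto simp: indicator_def G0)
  have sub: "Bs a \<subseteq> Bs b"
  proof
    fix u assume "u \<in> Bs a"
    then consider "a * r \<le> norm u" | "\<bar>snd u\<bar> \<le> Cg * a powr (-\<beta>) * norm (fst u) powr (1+\<beta>)"
      by (auto simp: Bs_def)
    then show "u \<in> Bs b"
    proof cases
      case 1
      have "b * r \<le> a * r" using ab r by (intro mult_right_mono) auto
      then show ?thesis using 1 by (auto simp: Bs_def)
    next
      case 2
      have "a powr (-\<beta>) \<le> b powr (-\<beta>)" using ab \<beta> by (intro powr_mono2') auto
      then have "Cg * a powr (-\<beta>) * norm (fst u) powr (1+\<beta>) \<le> Cg * b powr (-\<beta>) * norm (fst u) powr (1+\<beta>)"
        using Cg by (intro mult_right_mono mult_left_mono) auto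
      then show ?thesis using 2 by (auto simp: Bs_def)
    qed
  qed
  show ?thesis
    using sub G0 by (intro integral_mono[OF iGB iGB]) (auto simp: indicator_def)
qed

lemma Bs_closed:
  fixes X Cg r \<beta> :: real assumes \<beta>: "\<beta> > 0"
  shows "closed {u :: (real^'m::finite) \<times> real. X * r \<le> norm u \<or> \<bar>snd u\<bar> \<le> Cg * X powr (-\<beta>) * norm (fst u) powr (1+\<beta>)}"
proof -
  have cpw: "continuous_on UNIV (\<lambda>u::(real^'m)\<times>real. norm (fst u) powr (1+\<beta>))"
    by (rule continuous_on_powr') (use \<beta> in \<open>auto intro!: continuous_intros\<close>)
  have cR: "continuous_on UNIV (\<lambda>u::(real^'m)\<times>real. Cg * X powr (-\<beta>) * norm (fst u) powr (1+\<beta>))"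
    using continuous_on_mult[OF continuous_on_const cpw] by simp
  show ?thesis
    by (intro closed_Collect_disj closed_Collect_le cR) (auto intro!: continuous_intros)
qed



theorem lemma2p1:
  fixes E :: "((real^'m::finite) \<times> real) set" and P :: "(real^'m::finite) \<times> real \<Rightarrow> real"
    and \<gamma> :: "(real^'m::finite) \<Rightarrow> real" and s \<beta> r C\<gamma> Cc CNs :: real
  assumes "0 < s" "s < 1" "0 < \<beta>" "\<beta> \<le> 1"
    and "kernel_profile s P Cc CNs"
    and "open E" "C1beta_boundary \<beta> E" "0 \<in> frontier E"
    and "r > 0"
    and "E \<inter> cyl r = {(y', yN). (y', yN) \<in> cyl r \<and> yN > \<gamma> y'}"
    and "C1beta_ball r \<beta> \<gamma>"
    and "\<forall>y'\<in>ball 0 r. \<bar>\<gamma> y'\<bar> \<le> C\<gamma> * norm y' powr (1 + \<beta>)"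
  shows "\<exists>t0>0. \<exists>C>0. \<forall>t. 0 < t \<and> t < t0 \<longrightarrow>
           (\<forall>z\<in>ball 0 (t powr (1/(2 * s))).
              \<exists>D. ((\<lambda>h. heat_w s P E (z + (0, h)) t) has_real_derivative D) (at 0) \<and>
                  D \<ge> C * t powr (-1/(2 * s))) \<and>
           C1_graph_set ({z. heat_w s P E z t = 0} \<inter> ball 0 (t powr (1/(2 * s))))"
proof -
  have s0: "0 < s" and \<beta>0: "0 < \<beta>" and r0: "r > 0" using assms by auto
  note kp = assms(5)
  note Eeq = assms(10)
  define p where "p = real (CARD('m) + 1) + 2 * s"
  define q where "q = p + 1"
  have pN: "real DIM((real^'m) \<times> real) < p" using s0 by (simp add: p_def)
  have qN: "real DIM((real^'m) \<times> real) < q" using pN by (simp add: q_def)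
  have p0: "p > 0" "q > 0" using s0 by (auto simp: p_def q_def)
  note kp2 = kp[unfolded kernel_profile_def]
  have Cc: "Cc > 0" using kp2 by (rule conjunct1)
  have exDP: "\<exists>DP. (\<forall>y. (P has_derivative (\<lambda>h. DP y \<bullet> h)) (at y)) \<and> continuous_on UNIV DP \<and>
        (\<forall>y. norm (DP y) \<le> Cc / (1 + norm y powr (real (CARD('m) + 1) + 2 * s + 1)))"
    using kp2[THEN conjunct2, THEN conjunct2, THEN conjunct2, THEN conjunct1] .
  have Pb: "\<forall>y. (1/Cc) / (1 + norm y powr (real (CARD('m) + 1) + 2 * s)) \<le> P y \<and>
          P y \<le> Cc / (1 + norm y powr (real (CARD('m) + 1) + 2 * s))"
    using kp2[THEN conjunct2, THEN conjunct2, THEN conjunct2, THEN conjunct2, THEN conjunct1] .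
  obtain DP where dP: "\<And>y. (P has_derivative (\<lambda>h. DP y \<bullet> h)) (at y)"
    and cDP: "continuous_on UNIV DP"
    and DPb0: "\<And>y. norm (DP y) \<le> Cc / (1 + norm y powr (real (CARD('m) + 1) + 2 * s + 1))"
    using exDP by blast
  have DPb: "norm (DP y) \<le> Cc / (1 + norm y powr q)" for y using DPb0[of y] by (simp add: q_def p_def)
  have Plo: "(1/Cc) / (1 + norm y powr p) \<le> P y" for y using Pb[rule_format, of y] unfolding p_def by (rule conjunct1)
  have Phi: "P y \<le> Cc / (1 + norm y powr p)" for y using Pb[rule_format, of y] unfolding p_def by (rule conjunct2)
  have c\<gamma>: "continuous_on (ball 0 r) \<gamma>"
  proof -
    obtain D where "\<forall>a\<in>ball 0 r. (\<gamma> has_derivative (\<lambda>h. D a \<bullet> h)) (at a)"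
      using assms(11) unfolding C1beta_ball_def by blast
    then show ?thesis
      by (meson continuous_at_imp_continuous_on has_derivative_continuous)
  qed
  have contP: "continuous_on UNIV P"
    using dP by (meson continuous_at_imp_continuous_on has_derivative_continuous)
  have Pm[measurable]: "P \<in> borel_measurable borel" using contP by (rule borel_measurable_continuous_onI)
  have den_pos: "0 < 1 + norm y powr e" for y :: "(real^'m) \<times> real" and e :: real
    by (simp add: add_pos_nonneg)
  have P0: "0 \<le> P y" for y
  proof -
    have "0 \<le> (1/Cc) / (1 + norm y powr p)" using Cc den_pos[of y p] by simp
    then show ?thesis using Plo[of y] by linarith
  qed
  have iP: "integrable lborel P"
  proof (rule integrable_decay[where C=Cc and R=1 and p=p])
    fix y :: "(real^'m) \<times> real"
    have "Cc / (1 + norm y powr p) \<le> Cc / 1"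
      using Cc by (intro divide_left_mono) (auto simp: add_pos_nonneg)
    then show "P y \<le> Cc" using Phi[of y] by simp
    assume y: "1 \<le> norm y"
    have "y \<noteq> 0" using y by (cases "y = 0") auto
    then have ny: "0 < norm y powr p" by simp
    have "Cc / (1 + norm y powr p) \<le> Cc / norm y powr p"
      using Cc y ny by (intro divide_left_mono) (auto simp: add_pos_nonneg)
    also have "\<dots> = Cc * norm y powr (-p)" by (simp add: powr_minus_divide)
    finally show "P y \<le> Cc * norm y powr (-p)" using Phi[of y] by linarith
  qed (use P0 pN Pm in auto)

  define G where "G u = 1 / (1 + (max 0 (norm u - 1)) powr q)" for u :: "(real^'m) \<times> real"
  have Gden: "0 < 1 + (max 0 (norm u - 1)) powr q" for u :: "(real^'m) \<times> real"
    by (simp add: add_pos_nonneg)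
  have G0: "0 \<le> G u" for u using Gden[of u] by (simp add: G_def)
  have G1: "G u \<le> 1" for u using Gden[of u] by (simp add: G_def)
  have contG: "continuous_on UNIV G"
  proof -
    have "continuous_on UNIV (\<lambda>u::(real^'m) \<times> real. (max 0 (norm u - 1)) powr q)"
      by (rule continuous_on_powr') (use p0 in \<open>auto intro!: continuous_intros\<close>)
    then have c2: "continuous_on UNIV (\<lambda>u::(real^'m) \<times> real. 1 + (max 0 (norm u - 1)) powr q)"
      by (intro continuous_on_add continuous_on_const)
    have nz: "\<forall>u\<in>(UNIV :: ((real^'m) \<times> real) set). 1 + (max 0 (norm u - 1)) powr q \<noteq> (0::real)"
    proof
      fix u :: "(real^'m) \<times> real" assume "u \<in> UNIV"
      show "1 + (max 0 (norm u - 1)) powr q \<noteq> (0::real)" using Gden[of u] by linarith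
    qed
    show ?thesis unfolding G_def[abs_def] by (rule continuous_on_divide[OF continuous_on_const c2 nz])
  qed
  have Gm[measurable]: "G \<in> borel_measurable borel" using contG by (rule borel_measurable_continuous_onI)
  have iG: "integrable lborel G"
  proof (rule integrable_decay[where C="2 powr q" and R=2 and p=q])
    fix u :: "(real^'m) \<times> real"
    have "1 \<le> 2 powr q" using p0 by (intro ge_one_powr_ge_zero) auto
    then show "G u \<le> 2 powr q" using G1[of u] by linarith
    assume u: "2 \<le> norm u"
    have "norm u / 2 \<le> max 0 (norm u - 1)" using u by auto
    then have "(norm u / 2) powr q \<le> (max 0 (norm u - 1)) powr q" using p0 u by (intro powr_mono2) auto
    then have le1: "norm u powr q / 2 powr q \<le> (max 0 (norm u - 1)) powr q" using u by (simp add: powr_divide)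
    have "u \<noteq> 0" using u by (cases "u = 0") auto
    then have pos: "0 < norm u powr q / 2 powr q" by simp
    define X where "X = (max 0 (norm u - 1)) powr q"
    have Xpos: "0 < X" using le1 pos unfolding X_def by linarith
    have le2: "norm u powr q / 2 powr q \<le> X" using le1 unfolding X_def .
    have "G u = 1 / (1 + X)" by (simp add: G_def X_def)
    also have "\<dots> \<le> 1 / X"
      using Xpos by (intro divide_left_mono) (auto intro: mult_pos_pos)
    also have "\<dots> \<le> 1 / (norm u powr q / 2 powr q)"
      using le2 mult_pos_pos[OF Xpos pos] by (intro divide_left_mono) auto
    also have "\<dots> = 2 powr q * norm u powr (-q)" by (simp add: powr_minus_divide)
    finally show "G u \<le> 2 powr q * norm u powr (-q)" .
  qed (use G0 qN Gm in auto)
  have Gv: "1 / (1 + norm (u - v) powr q) \<le> G u" if v: "norm v < 1" for u v :: "(real^'m) \<times> real"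
  proof -
    have "norm u \<le> norm (u - v) + norm v" by (metis norm_triangle_sub add.commute)
    then have "max 0 (norm u - 1) \<le> norm (u - v)" using v by auto
    then have "(max 0 (norm u - 1)) powr q \<le> norm (u - v) powr q" using p0 by (intro powr_mono2) auto
    then show ?thesis unfolding G_def using Gden[of u]
      by (intro divide_left_mono) (auto intro: add_pos_nonneg mult_pos_pos)
  qed

  define Cg where "Cg = \<bar>C\<gamma>\<bar>"
  define Bs where "Bs a = {u :: (real^'m) \<times> real. a * r \<le> norm u \<or> \<bar>snd u\<bar> \<le> Cg * a powr (-\<beta>) * norm (fst u) powr (1+\<beta>)}" for a :: real
  define eps where "eps a = (\<integral>u. G u * indicator (Bs a) u \<partial>lborel)" for a
  have eps_lim: "(\<lambda>n. eps (real n + 1)) \<longlonglongrightarrow> 0"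
    unfolding eps_def Bs_def by (rule eps_lemma[OF iG G0 r0 \<beta>0])
  have eps_mn: "eps a \<le> eps b" if "0 < b" "b \<le> a" for a b
    unfolding eps_def Bs_def by (rule eps_mono[OF iG G0 r0 \<beta>0 _ that]) (simp add: Cg_def)
  define m where "m = CARD('m)"
  have m0: "m > 0" by (simp add: m_def)
  define c1 where "c1 = 2 * (2 / real m) ^ m / (Cc * (1 + 3 powr p))"
  have c1: "c1 > 0" unfolding c1_def using Cc m0
    by (intro divide_pos_pos mult_pos_pos zero_less_power) (auto simp: add_pos_nonneg)
  obtain n0 where n0: "eps (real n0 + 1) < c1 / (4 * Cc)"
  proof -
    have "0 < c1 / (4 * Cc)" using c1 Cc by simp
    from LIMSEQ_D[OF eps_lim this] obtain n0 where "\<forall>n\<ge>n0. norm (eps (real n + 1) - 0) < c1 / (4 * Cc)" by blast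
    then have "\<bar>eps (real n0 + 1)\<bar> < c1 / (4 * Cc)" by auto
    then show ?thesis using that[of n0] by linarith
  qed
  define A where "A = real n0 + 1"
  have A1: "1 \<le> A" by (simp add: A_def)
  define t0 where "t0 = A powr (- 2 * s)"
  have t0: "t0 > 0" using A1 by (simp add: t0_def)
  have main: "(\<forall>z\<in>ball 0 (t powr (1/(2 * s))).
              \<exists>D. ((\<lambda>h. heat_w s P E (z + (0, h)) t) has_real_derivative D) (at 0) \<and>
                  D \<ge> c1 / 2 * t powr (-1/(2 * s))) \<and>
           C1_graph_set ({z. heat_w s P E z t = 0} \<inter> ball 0 (t powr (1/(2 * s))))"
    if t: "0 < t" "t < t0" for t
  proof -
    define a where "a = t powr (-1/(2 * s))"
    have a0: "a > 0" using t by (simp add: a_def)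
    have aA: "A < a"
    proof -
      have "t0 powr (-1/(2 * s)) < t powr (-1/(2 * s))"
        using t s0 by (intro powr_less_mono2_neg) auto
      moreover have "t0 powr (-1/(2 * s)) = A"
      proof -
        have e: "- 2 * s * (-1 / (2 * s)) = 1" using s0 by (simp add: field_simps)
        show ?thesis using A1 s0 by (simp add: t0_def powr_powr e)
      qed
      ultimately show ?thesis by (simp add: a_def)
    qed
    have rad: "t powr (1/(2 * s)) = 1/a"
      using t by (simp add: a_def powr_minus_divide)
    define kt where "kt = t powr (- real (CARD('m) + 1) / (2 * s))"
    have ktN: "kt = a ^ (m + 1)"
    proof -
      have "a ^ (m + 1) = a powr real (m + 1)" by (rule powr_realpow[OF a0, symmetric])
      also have "\<dots> = t powr ((-1/(2 * s)) * real (m + 1))" by (simp add: a_def powr_powr)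
      also have "\<dots> = kt" unfolding kt_def m_def
        by (rule arg_cong[where f="\<lambda>e. t powr e"]) (use s0 in \<open>simp add: field_simps\<close>)
      finally show ?thesis by simp
    qed
    have kt0: "kt > 0" using a0 ktN by simp
    define K where "K x = kern s P x t" for x
    have Kfun: "K = (\<lambda>x. kt * P (a *\<^sub>R x))" by (simp add: K_def[abs_def] kern_def kt_def a_def)
    define DK where "DK x = (kt * a) *\<^sub>R DP (a *\<^sub>R x)" for x
    have dK: "(K has_derivative (\<lambda>h. DK x \<bullet> h)) (at x)" for x
    proof -
      have "((\<lambda>x. a *\<^sub>R x) has_derivative (\<lambda>h. a *\<^sub>R h)) (at x)" by (auto intro!: derivative_eq_intros)
      from has_derivative_compose[OF this dP]
      have "((\<lambda>x. P (a *\<^sub>R x)) has_derivative (\<lambda>h. DP (a *\<^sub>R x) \<bullet> (a *\<^sub>R h))) (at x)" by (simp add: o_def)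
      then have "((\<lambda>x. kt * P (a *\<^sub>R x)) has_derivative (\<lambda>h. kt * (DP (a *\<^sub>R x) \<bullet> (a *\<^sub>R h)))) (at x)"
        by (rule has_derivative_mult_right)
      moreover have "(\<lambda>h. kt * (DP (a *\<^sub>R x) \<bullet> (a *\<^sub>R h))) = (\<lambda>h. DK x \<bullet> h)"
        by (auto simp: DK_def algebra_simps)
      ultimately show ?thesis by (simp add: Kfun)
    qed
    have cDK: "continuous_on UNIV DK"
    proof -
      have "continuous_on UNIV (\<lambda>x. DP (a *\<^sub>R x))"
        by (rule continuous_on_compose2[OF cDP]) (auto intro!: continuous_intros)
      from continuous_on_scaleR[OF continuous_on_const this, of "kt * a"]
      show ?thesis unfolding DK_def[abs_def] .
    qed
    have iK: "integrable lborel K"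
    proof -
      have "integrable lborel (\<lambda>x. P (a *\<^sub>R x))" using integrable_affine_eucl[OF iP, of a 0] a0 by simp
      then show ?thesis unfolding Kfun by (rule integrable_mult_right)
    qed
    have K0: "0 \<le> K x" for x using P0 kt0 by (simp add: Kfun)
    have DKb: "norm (DK x) \<le> kt * a * Cc / (1 + norm (a *\<^sub>R x) powr q)" for x
    proof -
      have "norm (DK x) = kt * a * norm (DP (a *\<^sub>R x))" using kt0 a0 by (simp add: DK_def)
      also have "\<dots> \<le> kt * a * (Cc / (1 + norm (a *\<^sub>R x) powr q))"
        using kt0 a0 DPb[of "a *\<^sub>R x"] by (intro mult_left_mono) auto
      finally show ?thesis by simp
    qed
    have dom: "norm (DK (\<zeta> - y)) \<le> kt * a * Cc * G (a *\<^sub>R y - a *\<^sub>R z0)"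
      if "\<zeta> \<in> ball z0 (1/a)" for z0 \<zeta> y
    proof -
      have "a *\<^sub>R \<zeta> - a *\<^sub>R z0 = a *\<^sub>R (\<zeta> - z0)" by (simp add: scaleR_diff_right)
      then have e1: "norm (a *\<^sub>R \<zeta> - a *\<^sub>R z0) = a * norm (\<zeta> - z0)" using a0 by simp
      have "norm (\<zeta> - z0) < 1/a" using that by (simp add: dist_norm norm_minus_commute)
      then have "a * norm (\<zeta> - z0) < a * (1/a)" using a0 by (intro mult_strict_left_mono) auto
      then have v1: "norm (a *\<^sub>R \<zeta> - a *\<^sub>R z0) < 1" using a0 e1 by simp
      have eqn: "(a *\<^sub>R y - a *\<^sub>R z0) - (a *\<^sub>R \<zeta> - a *\<^sub>R z0) = - (a *\<^sub>R (\<zeta> - y))"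
        by (simp add: algebra_simps)
      have "1 / (1 + norm (a *\<^sub>R (\<zeta> - y)) powr q) \<le> G (a *\<^sub>R y - a *\<^sub>R z0)"
        using Gv[OF v1, of "a *\<^sub>R y - a *\<^sub>R z0"] unfolding eqn norm_minus_cancel .
      then have "kt * a * Cc * (1 / (1 + norm (a *\<^sub>R (\<zeta> - y)) powr q)) \<le> kt * a * Cc * G (a *\<^sub>R y - a *\<^sub>R z0)"
        using kt0 a0 Cc by (intro mult_left_mono) auto
      then have "kt * a * Cc / (1 + norm (a *\<^sub>R (\<zeta> - y)) powr q) \<le> kt * a * Cc * G (a *\<^sub>R y - a *\<^sub>R z0)" by simp
      then show ?thesis using DKb[of "\<zeta> - y"] by (rule order_trans[rotated])
    qed
    have iH: "integrable lborel (\<lambda>y. kt * a * Cc * G (a *\<^sub>R y - a *\<^sub>R z0))" for z0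
    proof -
      have "integrable lborel (\<lambda>y. G (- (a *\<^sub>R z0) + a *\<^sub>R y))"
        using integrable_affine_eucl[OF iG, of a "- (a *\<^sub>R z0)"] a0 by simp
      moreover have "(\<lambda>y. G (- (a *\<^sub>R z0) + a *\<^sub>R y)) = (\<lambda>y. G (a *\<^sub>R y - a *\<^sub>R z0))"
        by (simp add: algebra_simps)
      ultimately have "integrable lborel (\<lambda>y. G (a *\<^sub>R y - a *\<^sub>R z0))" by simp
      then show ?thesis by (rule integrable_mult_right)
    qed

    have DKm[measurable]: "DK \<in> borel_measurable borel" using cDK by (rule borel_measurable_continuous_onI)
    have Eb[measurable]: "E \<in> sets borel" using assms(6) by (rule borel_open)
    have Ecb[measurable]: "- closure E \<in> sets borel" by (rule borel_open) auto
    have tm[measurable]: "tauE E \<in> borel_measurable borel"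
      unfolding tauE_def[abs_def] by measurable
    have tb: "\<bar>tauE E y\<bar> \<le> 1" for y using closure_subset[of E] by (auto simp: tauE_def indicator_def)
    define \<sigma> where "\<sigma> y = (if snd y > 0 then 1 else - 1 :: real)" for y :: "(real^'m) \<times> real"
    have Hs[measurable]: "{y :: (real^'m) \<times> real. 0 < snd y} \<in> sets borel"
      by (intro borel_open open_Collect_less continuous_intros)
    have \<sigma>eq: "\<sigma> = (\<lambda>y. 2 * indicator {y. 0 < snd y} y - 1)"
      by (auto simp: \<sigma>_def[abs_def] indicator_def)
    have \<sigma>m[measurable]: "\<sigma> \<in> borel_measurable borel" unfolding \<sigma>eq by measurable
    have \<sigma>b: "\<bar>\<sigma> y\<bar> \<le> 1" for y by (simp add: \<sigma>_def)
    define \<rho> where "\<rho> y = tauE E y - \<sigma> y" for y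
    have \<rho>m[measurable]: "\<rho> \<in> borel_measurable borel" unfolding \<rho>_def[abs_def] by measurable
    have \<rho>b: "\<bar>\<rho> y\<bar> \<le> 2" for y
      using abs_triangle_ineq4[of "tauE E y" "\<sigma> y"] tb[of y] \<sigma>b[of y] unfolding \<rho>_def by linarith
    define W where "W g z = (\<integral>y. K (z - y) * g y \<partial>lborel)" for g :: "(real^'m) \<times> real \<Rightarrow> real" and z
    define Fg where "Fg g z = (\<integral>y. g y *\<^sub>R DK (z - y) \<partial>lborel)" for g :: "(real^'m) \<times> real \<Rightarrow> real" and z
    have CD: "(W g has_derivative (\<lambda>h. Fg g z0 \<bullet> h)) (at z0) \<and> isCont (Fg g) z0"
      if gm: "g \<in> borel_measurable borel" and gb: "\<And>y. \<bar>g y\<bar> \<le> M" for g M z0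
    proof -
      have d: "0 < 1/a" using a0 by simp
      note cd = conv_deriv[OF dK cDK iK gm gb d iH[of z0] dom[of _ z0]]
      show ?thesis using cd unfolding W_def[abs_def] Fg_def[abs_def] by simp
    qed
    have heq: "heat_w s P E z t = W (tauE E) z" for z by (simp add: heat_w_def W_def K_def)
    have iKg: "integrable lborel (\<lambda>y. K (z - y) * g y)"
      if "g \<in> borel_measurable borel" "\<And>y. \<bar>g y\<bar> \<le> M" for g M z
      using integrable_conv[OF iK that] .
    have Wsplit: "W (tauE E) x = W \<sigma> x + W \<rho> x" for x
    proof -
      have "W (tauE E) x = (\<integral>y. K (x - y) * \<sigma> y + K (x - y) * \<rho> y \<partial>lborel)"
        unfolding W_def \<rho>_def by (simp add: algebra_simps)
      also have "\<dots> = W \<sigma> x + W \<rho> x" unfolding W_def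
        by (rule Bochner_Integration.integral_add[OF iKg[OF \<sigma>m \<sigma>b] iKg[OF \<rho>m \<rho>b]])
      finally show ?thesis .
    qed
    have keyset: "a *\<^sub>R y \<in> Bs a" if nz: "\<rho> y \<noteq> 0" for y
    proof (rule ccontr)
      assume nB: "a *\<^sub>R y \<notin> Bs a"
      have "a * norm y < a * r" using nB a0 by (auto simp: Bs_def mult.commute)
      then have n1: "norm y < r" using a0 by simp
      have n2: "Cg * a powr (-\<beta>) * norm (fst (a *\<^sub>R y)) powr (1+\<beta>) < \<bar>snd (a *\<^sub>R y)\<bar>"
        using nB by (auto simp: Bs_def)
      have e1: "norm (fst (a *\<^sub>R y)) powr (1+\<beta>) = a powr (1+\<beta>) * norm (fst y) powr (1+\<beta>)"
        using a0 by (simp add: powr_mult)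
      have e2: "a powr (-\<beta>) * a powr (1+\<beta>) = a"
        using a0 by (simp add: powr_add[symmetric])
      have "a * (Cg * norm (fst y) powr (1+\<beta>)) = Cg * a powr (-\<beta>) * norm (fst (a *\<^sub>R y)) powr (1+\<beta>)"
        unfolding e1 using e2 by (simp add: mult_ac)
      also have "\<dots> < a * \<bar>snd y\<bar>" using n2 a0 by (simp add: abs_mult)
      finally have big1: "Cg * norm (fst y) powr (1+\<beta>) < \<bar>snd y\<bar>" using a0 by simp
      have fy: "fst y \<in> ball 0 r" using n1 norm_fst_le[of "fst y" "snd y"] by simp
      have "\<bar>\<gamma> (fst y)\<bar> \<le> C\<gamma> * norm (fst y) powr (1 + \<beta>)" using assms(12) fy by blast
      also have "\<dots> \<le> Cg * norm (fst y) powr (1 + \<beta>)" unfolding Cg_def by (intro mult_right_mono) auto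
      finally have big: "\<bar>\<gamma> (fst y)\<bar> < \<bar>snd y\<bar>" using big1 by simp
      have "tauE E y = \<sigma> y" using bad_set[OF Eeq c\<gamma> n1 big] by (simp add: \<sigma>_def)
      then show False using nz by (simp add: \<rho>_def)
    qed
    have Bsm[measurable]: "Bs a \<in> sets borel"
      unfolding Bs_def by (rule borel_closed[OF Bs_closed[OF \<beta>0]])
    have lower: "c1 / 2 * a \<le> snd (Fg (tauE E) z)" if z: "z \<in> ball 0 (1/a)" for z
    proof -
      have nz: "norm z < 1/a" using z by simp
      have d\<tau>: "((\<lambda>h. W (tauE E) (z + (0, h))) has_real_derivative snd (Fg (tauE E) z)) (at 0)"
        using CD[OF tm tb, of z] by (intro deriv_dirN) auto
      have d\<rho>: "((\<lambda>h. W \<rho> (z + (0, h))) has_real_derivative snd (Fg \<rho> z)) (at 0)"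
        using CD[OF \<rho>m \<rho>b, of z] by (intro deriv_dirN) auto
      have Q\<tau>: "((\<lambda>h. (W (tauE E) (z + (0, h)) - W (tauE E) z) / h) \<longlongrightarrow> snd (Fg (tauE E) z)) (at 0)"
        using d\<tau> unfolding has_field_derivative_iff by (simp add: zero_prod_def[symmetric])
      have Q\<rho>: "((\<lambda>h. (W \<rho> (z + (0, h)) - W \<rho> z) / h) \<longlongrightarrow> snd (Fg \<rho> z)) (at 0)"
        using d\<rho> unfolding has_field_derivative_iff by (simp add: zero_prod_def[symmetric])
      have Q\<sigma>: "((\<lambda>h. (W \<sigma> (z + (0, h)) - W \<sigma> z) / h) \<longlongrightarrow> snd (Fg (tauE E) z) - snd (Fg \<rho> z)) (at 0)"
      proof -
        have "((\<lambda>h. (W (tauE E) (z + (0, h)) - W (tauE E) z) / h - (W \<rho> (z + (0, h)) - W \<rho> z) / h)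
            \<longlongrightarrow> snd (Fg (tauE E) z) - snd (Fg \<rho> z)) (at 0)"
          by (rule tendsto_diff[OF Q\<tau> Q\<rho>])
        moreover have "(\<lambda>h. (W (tauE E) (z + (0, h)) - W (tauE E) z) / h - (W \<rho> (z + (0, h)) - W \<rho> z) / h)
            = (\<lambda>h. (W \<sigma> (z + (0, h)) - W \<sigma> z) / h)"
          by (rule ext) (simp add: Wsplit add_divide_distrib diff_divide_distrib)
        ultimately show ?thesis by simp
      qed
      have Q\<sigma>r: "((\<lambda>h. (W \<sigma> (z + (0, h)) - W \<sigma> z) / h) \<longlongrightarrow> snd (Fg (tauE E) z) - snd (Fg \<rho> z)) (at_right 0)"
        using tendsto_mono[OF at_le[OF subset_UNIV] Q\<sigma>] .
      have strip: "c1 * a * h \<le> W \<sigma> (z + (0, h)) - W \<sigma> z" if h: "0 < h" "h < 1/a" for h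
      proof -
        define \<delta> where "\<delta> = 1 / (a * real m)"
        have \<delta>0: "\<delta> > 0" using a0 m0 by (simp add: \<delta>_def)
        define Bx where "Bx = cbox (-(\<delta> *\<^sub>R One)) (\<delta> *\<^sub>R One :: real^'m)"
        define S where "S = Bx \<times> {-h<..<0::real}"
        define \<kappa> where "\<kappa> = kt / (Cc * (1 + 3 powr p))"
        have p3: "0 < 1 + 3 powr p" by (simp add: add_pos_nonneg)
        have shift: "W \<sigma> (z + (0, h)) = (\<integral>y. K (z - y) * \<sigma> ((0, h) + y) \<partial>lborel)"
        proof -
          have "W \<sigma> (z + (0, h)) = (\<integral>y. K (z + (0, h) - y) * \<sigma> y \<partial>lborel)" by (simp add: W_def)
          also have "\<dots> = \<bar>1::real\<bar> ^ DIM((real^'m) \<times> real) *\<^sub>R (\<integral>y. K (z + (0, h) - ((0, h) + 1 *\<^sub>R y)) * \<sigma> ((0, h) + 1 *\<^sub>R y) \<partial>lborel)"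
            by (rule integral_affine_eucl[where c=1 and t="(0, h)"]) simp
          also have "\<dots> = (\<integral>y. K (z - y) * \<sigma> ((0, h) + y) \<partial>lborel)" by (simp add: algebra_simps)
          finally show ?thesis .
        qed
        have i\<sigma>s: "integrable lborel (\<lambda>y. K (z - y) * \<sigma> ((0, h) + y))"
        proof (rule iKg)
          show "(\<lambda>y. \<sigma> ((0, h) + y)) \<in> borel_measurable borel" by measurable
          show "\<bar>\<sigma> ((0, h) + y)\<bar> \<le> 1" for y by (rule \<sigma>b)
        qed
        have iD: "integrable lborel (\<lambda>y. K (z - y) * (\<sigma> ((0, h) + y) - \<sigma> y))"
          using Bochner_Integration.integrable_diff[OF i\<sigma>s iKg[OF \<sigma>m \<sigma>b, of z]] by (simp add: right_diff_distrib)
        have diff: "W \<sigma> (z + (0, h)) - W \<sigma> z = (\<integral>y. K (z - y) * (\<sigma> ((0, h) + y) - \<sigma> y) \<partial>lborel)"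
          unfolding shift using i\<sigma>s iKg[OF \<sigma>m \<sigma>b, of z]
          by (simp add: W_def right_diff_distrib Bochner_Integration.integral_diff)
        have "S \<in> sets ((lborel :: (real^'m) measure) \<Otimes>\<^sub>M (lborel :: real measure))"
          unfolding S_def Bx_def by (intro pair_measureI) auto
        then have Sm: "S \<in> sets lborel" by (metis lborel_prod)
        have mBx: "emeasure lborel Bx = ennreal ((2 * \<delta>) ^ m)"
        proof -
          have "prod ((\<bullet>) (\<delta> *\<^sub>R One + \<delta> *\<^sub>R One)) (Basis :: (real^'m) set) = prod (\<lambda>_. 2 * \<delta>) (Basis :: (real^'m) set)"
          proof (rule prod.cong)
            fix b :: "real^'m" assume b: "b \<in> Basis"
            have "(\<delta> *\<^sub>R One + \<delta> *\<^sub>R One) \<bullet> b = \<delta> * (One \<bullet> b) + \<delta> * (One \<bullet> b)"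
              by (simp only: inner_add_left inner_scaleR_left)
            then show "(\<delta> *\<^sub>R One + \<delta> *\<^sub>R One) \<bullet> b = 2 * \<delta>" using inner_sum_Basis[OF b] by simp
          qed simp
          then show ?thesis using \<delta>0 by (simp add: Bx_def emeasure_lborel_cbox_eq inner_diff_left m_def power_mult_distrib)
        qed
        have mS: "emeasure lborel S = ennreal ((2 * \<delta>) ^ m * h)"
        proof -
          have "emeasure (lborel :: ((real^'m) \<times> real) measure) S = emeasure ((lborel :: (real^'m) measure) \<Otimes>\<^sub>M (lborel :: real measure)) S"
            by (simp add: lborel_prod)
          also have "\<dots> = emeasure lborel Bx * emeasure lborel {-h<..<0::real}" unfolding S_def
            by (rule sigma_finite_measure.emeasure_pair_measure_Times) (auto intro: sigma_finite_lborel simp: Bx_def)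
          also have "emeasure lborel {-h<..<0::real} = ennreal h" using h by (simp add: emeasure_lborel_Ioo)
          finally show ?thesis using \<delta>0 h mBx by (simp add: ennreal_mult)
        qed
        have iS: "integrable lborel (\<lambda>y. 2 * \<kappa> * indicator S y)"
        proof -
          have "integrable lborel (indicator S :: _ \<Rightarrow> real)" using Sm mS by (simp add: integrable_indicator_iff)
          then show ?thesis by (rule integrable_mult_right)
        qed
        have intS: "(\<integral>y. 2 * \<kappa> * indicator S y \<partial>lborel) = 2 * \<kappa> * ((2 * \<delta>) ^ m * h)"
        proof -
          have "measure lborel S = (2 * \<delta>) ^ m * h" using mS \<delta>0 h by (simp add: measure_def)
          then show ?thesis by simp
        qed
        have pw: "2 * \<kappa> * indicator S y \<le> K (z - y) * (\<sigma> ((0, h) + y) - \<sigma> y)" for y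
        proof (cases "y \<in> S")
          case True
          obtain y1 y2 where yy: "y = (y1, y2)" by (cases y)
          have y1: "y1 \<in> Bx" and y2: "-h < y2" "y2 < 0" using True yy by (auto simp: S_def)
          have "norm y1 \<le> (\<Sum>b\<in>Basis. \<bar>y1 \<bullet> b\<bar>)" by (rule norm_le_l1)
          also have "\<dots> \<le> (\<Sum>b\<in>(Basis :: (real^'m) set). \<delta>)"
          proof (rule sum_mono)
            fix b :: "real^'m" assume b: "b \<in> Basis"
            show "\<bar>y1 \<bullet> b\<bar> \<le> \<delta>" using y1 b by (auto simp: Bx_def mem_box abs_le_iff inner_sum_Basis)
          qed
          also have "\<dots> = 1 / a" using a0 m0 by (simp add: \<delta>_def m_def)
          finally have ny1: "norm y1 \<le> 1 / a" .
          have "norm (z - y) \<le> norm z + norm y" by (rule norm_triangle_ineq4)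
          also have "norm y \<le> norm y1 + \<bar>y2\<bar>" using norm_Pair_le[of y1 y2] yy by simp
          finally have "norm (z - y) \<le> 3 / a" using nz ny1 y2 h by simp
          then have "a * norm (z - y) \<le> a * (3 / a)" using a0 by (intro mult_left_mono) auto
          then have "norm (a *\<^sub>R (z - y)) \<le> 3" using a0 by simp
          then have "norm (a *\<^sub>R (z - y)) powr p \<le> 3 powr p" using p0 by (intro powr_mono2) auto
          then have "(1/Cc) / (1 + 3 powr p) \<le> (1/Cc) / (1 + norm (a *\<^sub>R (z - y)) powr p)"
            using Cc p3 by (intro divide_left_mono) (auto intro!: mult_pos_pos add_pos_nonneg)
          also have "\<dots> \<le> P (a *\<^sub>R (z - y))" by (rule Plo)
          finally have Pl: "(1/Cc) / (1 + 3 powr p) \<le> P (a *\<^sub>R (z - y))" .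
          have "\<kappa> = kt * ((1/Cc) / (1 + 3 powr p))" by (simp add: \<kappa>_def)
          also have "\<dots> \<le> kt * P (a *\<^sub>R (z - y))" using kt0 Pl by (intro mult_left_mono) auto
          finally have Kl: "\<kappa> \<le> K (z - y)" by (simp add: Kfun)
          have "\<sigma> ((0, h) + y) - \<sigma> y = 2" using y2 yy by (simp add: \<sigma>_def)
          then show ?thesis using True Kl by simp
        next
          case False
          have "0 \<le> \<sigma> ((0, h) + y) - \<sigma> y" using h by (auto simp: \<sigma>_def)
          then show ?thesis using False K0[of "z - y"] by simp
        qed
        have "2 * \<kappa> * ((2 * \<delta>) ^ m * h) \<le> W \<sigma> (z + (0, h)) - W \<sigma> z"
          unfolding diff intS[symmetric] by (rule integral_mono[OF iS iD pw])
        moreover have "2 * \<kappa> * ((2 * \<delta>) ^ m * h) = c1 * a * h"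
        proof -
          define L where "L = (2 / real m) ^ m"
          have "2 * \<delta> = (2 / real m) / a" using a0 m0 by (simp add: \<delta>_def field_simps)
          then have e: "(2 * \<delta>) ^ m = L / a ^ m" unfolding L_def by (simp add: power_divide power_mult_distrib)
          have cL: "c1 = 2 * L / (Cc * (1 + 3 powr p))" by (simp add: c1_def L_def)
          have am: "a ^ m > 0" using a0 by simp
          have k: "a ^ (m + 1) / a ^ m = a" using am by (simp add: power_add)
          have alg: "2 * (X / Y) * (L / Z * h) = 2 * L / Y * (X / Z) * h" for X Y Z :: real
            by (simp add: divide_inverse mult_ac)
          show ?thesis unfolding e \<kappa>_def cL ktN alg k by (simp add: mult_ac)
        qed
        ultimately show ?thesis by linarith
      qed
      have low1: "c1 * a \<le> snd (Fg (tauE E) z) - snd (Fg \<rho> z)"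
      proof (rule tendsto_lowerbound[OF Q\<sigma>r])
        show "eventually (\<lambda>h. c1 * a \<le> (W \<sigma> (z + (0, h)) - W \<sigma> z) / h) (at_right 0)"
          unfolding eventually_at_right_field
        proof (intro exI[of _ "1/a"] conjI allI impI)
          show "(0::real) < 1/a" using a0 by simp
          fix h :: real assume "0 < h" "h < 1/a"
          then show "c1 * a \<le> (W \<sigma> (z + (0, h)) - W \<sigma> z) / h" using strip[of h] by (simp add: le_divide_eq)
        qed
        show "at_right (0::real) \<noteq> bot" by simp
      qed
      have bad: "\<bar>snd (Fg \<rho> z)\<bar> \<le> 2 * Cc * a * eps a"
      proof -
        define f where "f u = G u * indicator (Bs a) u" for u
        have fm[measurable]: "f \<in> borel_measurable borel" unfolding f_def[abs_def] by measurable
        have iF: "integrable lborel f" unfolding f_def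
          by (rule Bochner_Integration.integrable_bound[OF iG]) (auto simp: indicator_def G0)
        have iFa: "integrable lborel (\<lambda>y. f (a *\<^sub>R y))" using integrable_affine_eucl[OF iF, of a 0] a0 by simp
        have intFa: "(\<integral>y. f (a *\<^sub>R y) \<partial>lborel) = eps a / a ^ (m + 1)"
        proof -
          have "eps a = (\<integral>u. f u \<partial>lborel)" by (simp add: eps_def f_def)
          also have "\<dots> = \<bar>a\<bar> ^ DIM((real^'m) \<times> real) *\<^sub>R (\<integral>y. f (0 + a *\<^sub>R y) \<partial>lborel)"
            by (rule integral_affine_eucl) (use a0 in auto)
          finally show ?thesis using a0 by (simp add: m_def field_simps)
        qed
        have iHz: "integrable lborel (\<lambda>y. 2 * (kt * a * Cc * G (a *\<^sub>R y - a *\<^sub>R z)))"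
          using iH[of z] by (rule integrable_mult_right)
        have zb: "z \<in> ball z (1/a)" using a0 by simp
        have i\<rho>D: "integrable lborel (\<lambda>y. \<rho> y *\<^sub>R DK (z - y))"
        proof (rule Bochner_Integration.integrable_bound[OF iHz])
          show "(\<lambda>y. \<rho> y *\<^sub>R DK (z - y)) \<in> borel_measurable lborel" by measurable
          show "AE y in lborel. norm (\<rho> y *\<^sub>R DK (z - y)) \<le> norm (2 * (kt * a * Cc * G (a *\<^sub>R y - a *\<^sub>R z)))"
          proof (intro AE_I2)
            fix y
            have "norm (\<rho> y *\<^sub>R DK (z - y)) = \<bar>\<rho> y\<bar> * norm (DK (z - y))" by simp
            also have "\<dots> \<le> 2 * (kt * a * Cc * G (a *\<^sub>R y - a *\<^sub>R z))"
              using \<rho>b[of y] dom[OF zb, of y] by (intro mult_mono) auto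
            also have "\<dots> \<le> norm (2 * (kt * a * Cc * G (a *\<^sub>R y - a *\<^sub>R z)))" by simp
            finally show "norm (\<rho> y *\<^sub>R DK (z - y)) \<le> norm (2 * (kt * a * Cc * G (a *\<^sub>R y - a *\<^sub>R z)))" .
          qed
        qed
        have az: "norm (a *\<^sub>R z) < 1"
        proof -
          have "norm (a *\<^sub>R z) = a * norm z" using a0 by simp
          also have "\<dots> < a * (1/a)" using nz a0 by (intro mult_strict_left_mono) auto
          finally show ?thesis using a0 by simp
        qed
        have "\<bar>snd (Fg \<rho> z)\<bar> \<le> norm (Fg \<rho> z)"
          by (metis norm_snd_le prod.collapse real_norm_def)
        also have "norm (Fg \<rho> z) \<le> (\<integral>y. norm (\<rho> y *\<^sub>R DK (z - y)) \<partial>lborel)"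
          unfolding Fg_def by (rule integral_norm_bound)
        also have "\<dots> \<le> (\<integral>y. 2 * kt * a * Cc * f (a *\<^sub>R y) \<partial>lborel)"
        proof (rule integral_mono)
          show "integrable lborel (\<lambda>y. norm (\<rho> y *\<^sub>R DK (z - y)))" using i\<rho>D by (rule integrable_norm)
          show "integrable lborel (\<lambda>y. 2 * kt * a * Cc * f (a *\<^sub>R y))" using iFa by (rule integrable_mult_right)
          fix y
          show "norm (\<rho> y *\<^sub>R DK (z - y)) \<le> 2 * kt * a * Cc * f (a *\<^sub>R y)"
          proof (cases "\<rho> y = 0")
            case True
            have "0 \<le> f (a *\<^sub>R y)" using G0 by (simp add: f_def)
            then show ?thesis using True kt0 a0 Cc by simp
          next
            case False
            then have inB: "a *\<^sub>R y \<in> Bs a" by (rule keyset)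
            have eqn: "a *\<^sub>R y - a *\<^sub>R z = - (a *\<^sub>R (z - y))" by (simp add: algebra_simps)
            have g1: "1 / (1 + norm (a *\<^sub>R (z - y)) powr q) \<le> G (a *\<^sub>R y)"
              using Gv[OF az, of "a *\<^sub>R y"] unfolding eqn norm_minus_cancel .
            have "kt * a * Cc * (1 / (1 + norm (a *\<^sub>R (z - y)) powr q)) \<le> kt * a * Cc * G (a *\<^sub>R y)"
              using g1 kt0 a0 Cc by (intro mult_left_mono) auto
            then have "norm (DK (z - y)) \<le> kt * a * Cc * G (a *\<^sub>R y)"
              using DKb[of "z - y"] by simp
            then have "\<bar>\<rho> y\<bar> * norm (DK (z - y)) \<le> 2 * (kt * a * Cc * G (a *\<^sub>R y))"
              using \<rho>b[of y] by (intro mult_mono) auto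
            then show ?thesis using inB by (simp add: f_def mult_ac)
          qed
        qed
        also have "\<dots> = 2 * kt * a * Cc * (eps a / a ^ (m + 1))"
          by (simp add: intFa)
        also have "\<dots> = 2 * Cc * a * eps a" using a0 by (simp add: ktN field_simps)
        finally show ?thesis .
      qed
      have "eps a \<le> eps A" using eps_mn[of A a] aA A1 by simp
      then have "eps a < c1 / (4 * Cc)" using n0 by (simp add: A_def)
      then have "2 * Cc * a * eps a \<le> 2 * Cc * a * (c1 / (4 * Cc))" using Cc a0 by (intro mult_left_mono) auto
      also have "\<dots> = c1 * a / 2" using Cc by (simp add: field_simps)
      finally show ?thesis using low1 bad by linarith
    qed
    show ?thesis
    proof (intro conjI ballI)
      fix z :: "(real^'m) \<times> real" assume z: "z \<in> ball 0 (t powr (1/(2 * s)))"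
      then have z': "z \<in> ball 0 (1/a)" using rad by simp
      have "((\<lambda>h. W (tauE E) (z + (0, h))) has_real_derivative snd (Fg (tauE E) z)) (at 0)"
        using CD[OF tm tb, of z] by (intro deriv_dirN) auto
      then have "((\<lambda>h. heat_w s P E (z + (0, h)) t) has_real_derivative snd (Fg (tauE E) z)) (at 0)"
        by (simp add: heq)
      moreover have "c1 / 2 * t powr (-1/(2 * s)) \<le> snd (Fg (tauE E) z)" using lower[OF z'] by (simp add: a_def)
      ultimately show "\<exists>D. ((\<lambda>h. heat_w s P E (z + (0, h)) t) has_real_derivative D) (at 0) \<and>
                  D \<ge> c1 / 2 * t powr (-1/(2 * s))" by blast
    next
      have "C1_graph_set ({z. W (tauE E) z = 0} \<inter> ball 0 (1/a))"
      proof (rule C1_graph_from_deriv[where F="Fg (tauE E)"])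
        show "open (ball (0::(real^'m) \<times> real) (1/a))" by simp
        show "convex (ball (0::(real^'m) \<times> real) (1/a))" by simp
        show "(W (tauE E) has_derivative (\<lambda>v. Fg (tauE E) z \<bullet> v)) (at z)" if "z \<in> ball 0 (1/a)" for z
          using CD[OF tm tb, of z] by blast
        show "continuous_on (ball 0 (1/a)) (Fg (tauE E))"
          using CD[OF tm tb] by (intro continuous_at_imp_continuous_on) blast
        show "0 < snd (Fg (tauE E) z)" if "z \<in> ball 0 (1/a)" for z
        proof -
          have "0 < c1 / 2 * a" using c1 a0 by simp
          then show ?thesis using lower[OF that] by linarith
        qed
      qed
      then show "C1_graph_set ({z. heat_w s P E z t = 0} \<inter> ball 0 (t powr (1/(2 * s))))"
        by (simp add: heq rad)
    qed
  qed
  have M: "\<forall>t. 0 < t \<and> t < t0 \<longrightarrow> ((\<forall>z\<in>ball 0 (t powr (1/(2 * s))).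
              \<exists>D. ((\<lambda>h. heat_w s P E (z + (0, h)) t) has_real_derivative D) (at 0) \<and>
                  D \<ge> c1 / 2 * t powr (-1/(2 * s))) \<and>
           C1_graph_set ({z. heat_w s P E z t = 0} \<inter> ball 0 (t powr (1/(2 * s)))))"
    using main by blast
  have c2: "0 < c1 / 2" using c1 by simp
  show ?thesis
    by (rule exI[of _ t0], rule conjI[OF t0], rule exI[of _ "c1/2"], rule conjI[OF c2], rule M)
qed

end
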